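(* Let $\Lambda\subseteq[\mu,L]$ be compact with $0<\mu<L$ and $K\ge1$, let $\sigma_K^\Lambda$ be the optimal link polynomial of degree $K$ (defined in the context), and set $\sigma_0=\sigma_K^\Lambda(0)$. Suppose $m\in(0,1)$ and $h_0,\dots,h_{K-1}\in\mathbb{R}$ satisfy $\sigma(\lambda;\{h_i\},m)=\sigma_K^\Lambda(\lambda)$ for all $\lambda\in\mathbb{R}$. Then: (1) these parameters minimize the asymptotic rate factor of $\mathrm{HB}_K(h_0,\dots,h_{K-1};m)$ over $\mathcal{C}_\Lambda$ (as given by the formula in terms of $\sigma_*=\sup_\Lambda|\sigma(\cdot;\{h_i\},m)|$: $\sqrt m$ if $\sigma_*\le1$, $\sqrt m(\sigma_*+\sqrt{\sigma_*^2-1})^{1/K}$ otherwise) among all choices of $m\in(0,1)$ and $K$ step-sizes; (2) $m=\big(\sigma_0-\sqrt{\sigma_0^2-1}\big)^{2/K}$; (3) the residual polynomials $P_t$ of the method (i.e. $x_t-x_*=P_t(H)(x_0-x_* )$) satisfy, for all $n\ge0$, $P_{(n+2)K}(\lambda)=2a_\infty\sigma_K^\Lambda(\lambda)P_{(n+1)K}(\lambda)-a_\infty^2P_{nK}(\lambda)$, where $a_\infty=\sigma_0-\sqrt{\sigma_0^2-1}$; (4) the worst-case rate satisfies $r_t=O\big(t(\sigma_0-\sqrt{\sigma_0^2-1})^{t/K}\big)$ and the asymptotic rate factor is $1-\tau=(\sigma_0-\sqrt{\sigma_0^2-1})^{1/K}$.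
   Context: $\mathbb{R}_K[X]$ is the set of real polynomials of degree at most $K$. The optimal link polynomial $\sigma_K^\Lambda$ is the maximizer of $\sigma(0)$ over $\sigma\in\mathbb{R}_K[X]$ subject to $\sup_{\lambda\in\Lambda}|\sigma(\lambda)|\le1$. For $m\in(0,1)$ and $h_0,\dots,h_{K-1}$, $\sigma(\lambda;\{h_i\},m)=\tfrac12\operatorname{Tr}(M_1\cdots M_K)$ with $M_i=\begin{pmatrix}\frac{1+m-h_{K-i}\lambda}{\sqrt m}&-1\\1&0\end{pmatrix}$. $\mathcal{C}_\Lambda$ is the class of all quadratics $f(x)=\tfrac12(x-x_* )^\top H(x-x_* )+f_*$ on $\mathbb{R}^d$ (any $d$) with $H$ symmetric and $\mathrm{Sp}(H)\subseteq\Lambda$. The cyclical heavy ball method $\mathrm{HB}_K(h_0,\dots,h_{K-1};m)$ produces $x_1=x_0-\frac{h_0}{1+m}\nabla f(x_0)$ and $x_{t+1}=x_t-h_{t\bmod K}\nabla f(x_t)+m(x_t-x_{t-1})$ for $t\ge1$. Worst-case rate $r_t=\sup_{f\in\mathcal{C}_\Lambda,x_0\ne x_*}\|x_t-x_*\|/\|x_0-x_*\|$; asymptotic rate factor $1-\tau=\limsup_t r_t^{1/t}$. *)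

theory Defs
  imports Complex_Main
    "Jordan_Normal_Form.Char_Poly"
    "HOL-Computational_Algebra.Polynomial"
    "HOL-Library.Landau_Symbols"
    "HOL-Library.Extended_Real"
begin

definition is_optimal_link_poly :: "nat \<Rightarrow> real set \<Rightarrow> real poly \<Rightarrow> bool" where
  "is_optimal_link_poly K Lam s \<longleftrightarrow>
     degree s \<le> K \<and> (\<forall>l\<in>Lam. \<bar>poly s l\<bar> \<le> 1) \<and>
     (\<forall>q :: real poly. degree q \<le> K \<longrightarrow> (\<forall>l\<in>Lam. \<bar>poly q l\<bar> \<le> 1) \<longrightarrow> poly q 0 \<le> poly s 0)"

definition link_mat :: "(nat \<Rightarrow> real) \<Rightarrow> real \<Rightarrow> nat \<Rightarrow> real \<Rightarrow> nat \<Rightarrow> real mat" where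
  "link_mat h m K lam i =
     mat_of_rows_list 2 [[(1 + m - h (K - i) * lam) / sqrt m, -1], [1, 0]]"

definition trace2 :: "real mat \<Rightarrow> real" where
  "trace2 A = A $$ (0,0) + A $$ (1,1)"

definition link_sigma :: "(nat \<Rightarrow> real) \<Rightarrow> real \<Rightarrow> nat \<Rightarrow> real \<Rightarrow> real" where
  "link_sigma h m K lam =
     trace2 (foldr (\<lambda>i A. link_mat h m K lam i * A) [1..<K+1] (1\<^sub>m 2)) / 2"

definition sigma_star :: "real set \<Rightarrow> (nat \<Rightarrow> real) \<Rightarrow> real \<Rightarrow> nat \<Rightarrow> real" where
  "sigma_star Lam h m K = (SUP l\<in>Lam. \<bar>link_sigma h m K l\<bar>)"

definition rate_factor_formula :: "real set \<Rightarrow> (nat \<Rightarrow> real) \<Rightarrow> real \<Rightarrow> nat \<Rightarrow> real" where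
  "rate_factor_formula Lam h m K =
     (let s = sigma_star Lam h m K in
      if s \<le> 1 then sqrt m else sqrt m * (s + sqrt (s\<^sup>2 - 1)) powr (1 / real K))"

text \<open>Iterates of HB_K(h;m) on f(x) = 1/2 (x-xs)^T H (x-xs) + f_*, whose gradient is
  H (x - xs) (H symmetric).\<close>
fun hb_iter :: "(nat \<Rightarrow> real) \<Rightarrow> real \<Rightarrow> nat \<Rightarrow> real mat \<Rightarrow> real vec \<Rightarrow> real vec
                  \<Rightarrow> nat \<Rightarrow> real vec" where
  "hb_iter h m K H xs x0 0 = x0"
| "hb_iter h m K H xs x0 (Suc 0) = x0 - (h 0 / (1 + m)) \<cdot>\<^sub>v (H *\<^sub>v (x0 - xs))"
| "hb_iter h m K H xs x0 (Suc (Suc t)) =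
     hb_iter h m K H xs x0 (Suc t)
     - h (Suc t mod K) \<cdot>\<^sub>v (H *\<^sub>v (hb_iter h m K H xs x0 (Suc t) - xs))
     + m \<cdot>\<^sub>v (hb_iter h m K H xs x0 (Suc t) - hb_iter h m K H xs x0 t)"

definition vnorm :: "real vec \<Rightarrow> real" where
  "vnorm v = sqrt (v \<bullet> v)"

definition worst_rate :: "real set \<Rightarrow> (nat \<Rightarrow> real) \<Rightarrow> real \<Rightarrow> nat \<Rightarrow> nat \<Rightarrow> real" where
  "worst_rate Lam h m K t =
     Sup {vnorm (hb_iter h m K H xs x0 t - xs) / vnorm (x0 - xs) | d H xs x0.
            H \<in> carrier_mat d d \<and> transpose_mat H = H \<and>
            (\<forall>l. eigenvalue H l \<longrightarrow> l \<in> Lam) \<and>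
            xs \<in> carrier_vec d \<and> x0 \<in> carrier_vec d \<and> x0 \<noteq> xs}"

definition asymp_rate :: "real set \<Rightarrow> (nat \<Rightarrow> real) \<Rightarrow> real \<Rightarrow> nat \<Rightarrow> ereal" where
  "asymp_rate Lam h m K = limsup (\<lambda>t. ereal (worst_rate Lam h m K t powr (1 / real t)))"

text \<open>Residual polynomials: x_t - xs = P_t(H)(x0 - xs).\<close>
fun res_poly :: "(nat \<Rightarrow> real) \<Rightarrow> real \<Rightarrow> nat \<Rightarrow> nat \<Rightarrow> real poly" where
  "res_poly h m K 0 = 1"
| "res_poly h m K (Suc 0) = [:1, - h 0 / (1 + m):]"
| "res_poly h m K (Suc (Suc t)) =
     [:1 + m, - h (Suc t mod K):] * res_poly h m K (Suc t) - Polynomial.smult m (res_poly h m K t)"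

end

theory Submission
  imports Defs "HOL-Real_Asymp.Real_Asymp"
begin


definition pev :: "real mat \<Rightarrow> real poly \<Rightarrow> real vec \<Rightarrow> real vec" where
  "pev H p v = fold_coeffs (\<lambda>a w. a \<cdot>\<^sub>v v + H *\<^sub>v w) p (0\<^sub>v (dim_vec v))"

lemma map_of_real_pCons: "map_poly complex_of_real (pCons a p) = pCons (of_real a) (map_poly of_real p)"
  by (cases "a = 0 \<and> p = 0") (auto simp: map_poly_pCons)

lemma map_of_real_mult: "map_poly complex_of_real (p * q) = map_poly of_real p * map_poly of_real q"
  by (induct p) (simp_all add: map_of_real_pCons map_poly_smult of_real_hom.map_poly_hom_add)

lemma deg1_poly: assumes "degree (r::real poly) \<le> 1" shows "r = [:coeff r 0, coeff r 1:]"
proof (rule poly_eqI)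
  fix n show "coeff r n = coeff [:coeff r 0, coeff r 1:] n"
    using assms by (cases n; cases "n - 1") (auto simp: coeff_eq_0)
qed

lemma sp_self_ge0: "(v::real vec) \<bullet> v \<ge> 0"
  by (simp add: scalar_prod_def sum_nonneg)

lemma sp_self_eq0: assumes v: "v \<in> carrier_vec n" and z: "(v::real vec) \<bullet> v = 0"
  shows "v = 0\<^sub>v n"
proof (rule eq_vecI)
  fix i assume "i < dim_vec (0\<^sub>v n :: real vec)"
  hence i: "i < dim_vec v" using v by auto
  have "(\<Sum>i\<in>{0..<dim_vec v}. v $ i * v $ i) = 0" using z by (simp add: scalar_prod_def)
  hence "\<forall>i\<in>{0..<dim_vec v}. v $ i * v $ i = 0"
    by (subst (asm) sum_nonneg_eq_0_iff) auto
  with i show "v $ i = 0\<^sub>v n $ i" using v by auto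
qed (use v in auto)

definition vsum :: "nat \<Rightarrow> (real \<times> real vec) list \<Rightarrow> real vec" where
  "vsum n ws = foldr (\<lambda>lw acc. snd lw + acc) ws (0\<^sub>v n)"

lemma vsum_Nil[simp]: "vsum n [] = 0\<^sub>v n" by (simp add: vsum_def)
lemma vsum_Cons[simp]: "vsum n (x # ws) = snd x + vsum n ws" by (simp add: vsum_def)

locale symH =
  fixes d :: nat and H :: "real mat"
  assumes H: "H \<in> carrier_mat d d" and symm: "transpose_mat H = H"
begin

lemma pev_0[simp]: "pev H 0 v = 0\<^sub>v (dim_vec v)"
  by (simp add: pev_def)

lemma pev_pCons: assumes v: "v \<in> carrier_vec d"
  shows "pev H (pCons a p) v = a \<cdot>\<^sub>v v + H *\<^sub>v pev H p v"
proof (cases "p = 0")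
  case True
  show ?thesis
  proof (cases "a = 0")
    case True
    with \<open>p = 0\<close> show ?thesis using v H
      by (intro eq_vecI) (auto simp: pev_def)
  next
    case False
    with \<open>p = 0\<close> show ?thesis using v H
      by (simp add: pev_def)
  qed
next
  case False
  then show ?thesis by (simp add: pev_def)
qed

lemma pev_carrier[simp]: "v \<in> carrier_vec d \<Longrightarrow> pev H p v \<in> carrier_vec d"
  by (induct p rule: pCons_induct) (use H in \<open>auto simp: pev_pCons\<close>)

lemma pev_dim[simp]: "v \<in> carrier_vec d \<Longrightarrow> dim_vec (pev H p v) = d"
  using pev_carrier carrier_vecD by blast

lemma Hv_carrier[simp]: "v \<in> carrier_vec d \<Longrightarrow> H *\<^sub>v v \<in> carrier_vec d"
  using H by auto

lemma H_add: "x \<in> carrier_vec d \<Longrightarrow> y \<in> carrier_vec d \<Longrightarrow> H *\<^sub>v (x + y) = H *\<^sub>v x + H *\<^sub>v y"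
  using H mult_add_distrib_mat_vec by blast

lemma H_smult: "x \<in> carrier_vec d \<Longrightarrow> H *\<^sub>v (c \<cdot>\<^sub>v x) = c \<cdot>\<^sub>v (H *\<^sub>v x)"
  using H mult_mat_vec by blast

lemma H_zero[simp]: "H *\<^sub>v 0\<^sub>v d = 0\<^sub>v d"
  using H by (intro eq_vecI) auto

lemma dimH[simp]: "dim_row H = d" "dim_col H = d" using H by auto

lemma pev_add_vec: assumes x: "x \<in> carrier_vec d" and y: "y \<in> carrier_vec d"
  shows "pev H p (x + y) = pev H p x + pev H p y"
proof -
  have [simp]: "dim_vec x = d" "dim_vec y = d" using x y by auto
  show ?thesis
  proof (induct p rule: pCons_induct)
    case 0 then show ?case by (intro eq_vecI) auto
  next
    case (pCons a p)
    then show ?case using x y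
      by (simp add: pev_pCons H_add) (intro eq_vecI, auto simp: algebra_simps)
  qed
qed

lemma pev_smult_vec: assumes x: "x \<in> carrier_vec d"
  shows "pev H p (c \<cdot>\<^sub>v x) = c \<cdot>\<^sub>v pev H p x"
proof -
  have [simp]: "dim_vec x = d" using x by auto
  show ?thesis
  proof (induct p rule: pCons_induct)
    case 0 then show ?case by (intro eq_vecI) auto
  next
    case (pCons a p)
    then show ?case using x
      by (simp add: pev_pCons H_add H_smult) (intro eq_vecI, auto simp: algebra_simps)
  qed
qed

lemma pev_add: assumes x: "x \<in> carrier_vec d"
  shows "pev H (p + q) x = pev H p x + pev H q x"
proof -
  have [simp]: "dim_vec x = d" using x by auto
  show ?thesis
    apply (induct p q rule: poly_induct2)
     apply (intro eq_vecI, simp_all)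
    apply (simp add: pev_pCons H_add x)
    apply (intro eq_vecI, auto simp: algebra_simps x)
    done
qed

lemma pev_smult: assumes x: "x \<in> carrier_vec d"
  shows "pev H (Polynomial.smult c p) x = c \<cdot>\<^sub>v pev H p x"
proof -
  have [simp]: "dim_vec x = d" using x by auto
  show ?thesis
  proof (induct p rule: pCons_induct)
    case 0 then show ?case by (intro eq_vecI) auto
  next
    case (pCons a p)
    then show ?case using x
      by (simp add: pev_pCons H_add H_smult) (intro eq_vecI, auto simp: algebra_simps)
  qed
qed

lemma pev_H: "x \<in> carrier_vec d \<Longrightarrow> pev H p (H *\<^sub>v x) = H *\<^sub>v pev H p x"
proof (induct p rule: pCons_induct)
  case 0 then show ?case by (intro eq_vecI) auto
next
  case (pCons a p)
  then show ?case
    by (simp add: pev_pCons H_add H_smult)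
qed

lemma pev_mult: "x \<in> carrier_vec d \<Longrightarrow> pev H (p * q) x = pev H p (pev H q x)"
proof (induct p rule: pCons_induct)
  case 0 then show ?case by simp
next
  case (pCons a p)
  have "pev H (pCons a p * q) x = pev H (Polynomial.smult a q + pCons 0 (p * q)) x" by simp
  also have "\<dots> = a \<cdot>\<^sub>v pev H q x + H *\<^sub>v pev H (p * q) x"
    using pCons by (simp add: pev_add pev_smult pev_pCons) (intro eq_vecI, auto dest: carrier_vecD)
  also have "\<dots> = pev H (pCons a p) (pev H q x)"
    using pCons by (simp add: pev_pCons)
  finally show ?case .
qed

lemma pev_const: "x \<in> carrier_vec d \<Longrightarrow> pev H [:c:] x = c \<cdot>\<^sub>v x"
  by (simp add: pev_pCons)

lemma pev_one: "x \<in> carrier_vec d \<Longrightarrow> pev H 1 x = x"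
  using pev_const[of x 1] by (simp add: one_pCons)

lemma pev_eigen: assumes x: "x \<in> carrier_vec d" and e: "H *\<^sub>v x = l \<cdot>\<^sub>v x"
  shows "pev H p x = poly p l \<cdot>\<^sub>v x"
proof (induct p rule: pCons_induct)
  case 0 then show ?case using x by (intro eq_vecI) (auto dest: carrier_vecD)
next
  case (pCons a p)
  then show ?case using x e
    by (simp add: pev_pCons H_smult) (intro eq_vecI, auto simp: algebra_simps dest: carrier_vecD)
qed

lemma H_sym: "x \<in> carrier_vec d \<Longrightarrow> y \<in> carrier_vec d \<Longrightarrow> x \<bullet> (H *\<^sub>v y) = (H *\<^sub>v x) \<bullet> y"
  using transpose_vec_mult_scalar[OF H, of y x] symm by simp

lemma pev_sym: "x \<in> carrier_vec d \<Longrightarrow> y \<in> carrier_vec d \<Longrightarrow> x \<bullet> pev H p y = pev H p x \<bullet> y"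
proof (induct p arbitrary: x rule: pCons_induct)
  case 0 then show ?case by simp
next
  case (pCons a p)
  have "x \<bullet> pev H (pCons a p) y = a * (x \<bullet> y) + x \<bullet> (H *\<^sub>v pev H p y)"
    using pCons by (simp add: pev_pCons scalar_prod_add_distrib[of _ d])
  also have "x \<bullet> (H *\<^sub>v pev H p y) = (H *\<^sub>v x) \<bullet> pev H p y"
    using pCons by (simp add: H_sym)
  also have "\<dots> = pev H p (H *\<^sub>v x) \<bullet> y" using pCons by simp
  also have "\<dots> = (H *\<^sub>v pev H p x) \<bullet> y" using pCons by (simp add: pev_H)
  finally show ?case using pCons
    by (simp add: pev_pCons add_scalar_prod_distrib[of _ d])
qed

definition goodl :: "(real \<times> real vec) list \<Rightarrow> bool" where
  "goodl ws \<longleftrightarrow> (\<forall>lw\<in>set ws. snd lw \<in> carrier_vec d \<and> H *\<^sub>v snd lw = fst lw \<cdot>\<^sub>v snd lw)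
     \<and> sorted_wrt (\<lambda>x y. snd x \<bullet> snd y = 0) ws"

lemma pev_sum_idx: assumes x: "x \<in> carrier_vec d" and i: "i < d"
  shows "pev H (\<Sum>j<(n::nat). f j) x $ i = (\<Sum>j<n. pev H (f j) x $ i)"
proof (induct n)
  case 0 then show ?case using i x by simp
next
  case (Suc n) then show ?case using x i by (simp add: pev_add)
qed

lemma annih: assumes v: "v \<in> carrier_vec d"
  shows "\<exists>g. g \<noteq> 0 \<and> degree g \<le> d \<and> pev H g v = 0\<^sub>v d"
proof -
  define A where "A = mat (Suc d) (Suc d) (\<lambda>(i,j). if i < d then pev H (monom 1 j) v $ i else 0)"
  have A: "A \<in> carrier_mat (Suc d) (Suc d)" by (simp add: A_def)
  have AT: "transpose_mat A \<in> carrier_mat (Suc d) (Suc d)" by (simp add: A_def)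
  have "transpose_mat A *\<^sub>v unit_vec (Suc d) d = 0\<^sub>v (Suc d)"
  proof (rule eq_vecI)
    fix j assume "j < dim_vec (0\<^sub>v (Suc d) :: real vec)"
    hence j: "j < Suc d" by simp
    have "row (transpose_mat A) j \<bullet> unit_vec (Suc d) d = row (transpose_mat A) j $ d"
      using AT j by (subst scalar_prod_right_unit) auto
    also have "\<dots> = 0" using j by (simp add: A_def)
    finally show "(transpose_mat A *\<^sub>v unit_vec (Suc d) d) $ j = 0\<^sub>v (Suc d) $ j"
      using j AT by simp
  qed (simp add: A_def)
  moreover have "unit_vec (Suc d) d \<noteq> (0\<^sub>v (Suc d) :: real vec)"
  proof
    assume "unit_vec (Suc d) d = (0\<^sub>v (Suc d) :: real vec)"
    hence "unit_vec (Suc d) d $ d = (0\<^sub>v (Suc d) :: real vec) $ d" by simp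
    thus False by simp
  qed
  ultimately have "det (transpose_mat A) = 0"
    using det_0_iff_vec_prod_zero_field[OF AT] by (meson unit_vec_carrier)
  hence "det A = 0" using det_transpose[OF A] by simp
  then obtain c where c: "c \<in> carrier_vec (Suc d)" "c \<noteq> 0\<^sub>v (Suc d)" "A *\<^sub>v c = 0\<^sub>v (Suc d)"
    using det_0_iff_vec_prod_zero_field[OF A] by blast
  define g where "g = (\<Sum>j<Suc d. monom (c $ j) j)"
  have cg: "coeff g n = (if n < Suc d then c $ n else 0)" for n
    by (simp add: g_def coeff_sum coeff_monom)
  have "g \<noteq> 0"
  proof
    assume "g = 0"
    hence "c $ n = 0" if "n < Suc d" for n using cg[of n] that by simp
    hence "c = 0\<^sub>v (Suc d)" using c(1) by (intro eq_vecI) auto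
    with c(2) show False by simp
  qed
  moreover have "degree g \<le> d"
    by (rule degree_le) (simp add: cg)
  moreover have "pev H g v = 0\<^sub>v d"
  proof (rule eq_vecI)
    fix i assume "i < dim_vec (0\<^sub>v d :: real vec)"
    hence i: "i < d" by simp
    have "pev H g v $ i = (\<Sum>j<Suc d. pev H (monom (c $ j) j) v $ i)"
      unfolding g_def by (rule pev_sum_idx[OF v i])
    also have "\<dots> = (\<Sum>j<Suc d. c $ j * pev H (monom 1 j) v $ i)"
    proof (rule sum.cong[OF refl])
      fix j
      have "monom (c $ j) j = Polynomial.smult (c $ j) (monom 1 j)" by (simp add: smult_monom)
      thus "pev H (monom (c $ j) j) v $ i = c $ j * pev H (monom 1 j) v $ i"
        using v i by (simp add: pev_smult)
    qed
    also have "\<dots> = (A *\<^sub>v c) $ i"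
      using i c(1) by (simp add: A_def scalar_prod_def row_def atLeast0LessThan mult.commute)
    also have "\<dots> = 0" using c(3) i by simp
    finally show "pev H g v $ i = 0\<^sub>v d $ i" using i by simp
  qed (use v in simp)
  ultimately show ?thesis by blast
qed

lemma pev_lin1: assumes w: "w \<in> carrier_vec d"
  shows "pev H [:b, 1:] w = b \<cdot>\<^sub>v w + H *\<^sub>v w"
proof -
  have "pev H [:b, 1:] w = b \<cdot>\<^sub>v w + H *\<^sub>v (1 \<cdot>\<^sub>v w + H *\<^sub>v pev H 0 w)"
    using w by (simp add: pev_pCons)
  also have "1 \<cdot>\<^sub>v w + H *\<^sub>v pev H 0 w = w" using w by (intro eq_vecI) auto
  finally show ?thesis .
qed

lemma pev_quad: assumes w: "w \<in> carrier_vec d"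
  shows "pev H [:a, b, 1:] w = a \<cdot>\<^sub>v w + b \<cdot>\<^sub>v (H *\<^sub>v w) + H *\<^sub>v (H *\<^sub>v w)"
proof -
  have "pev H [:a, b, 1:] w = a \<cdot>\<^sub>v w + H *\<^sub>v (pev H [:b, 1:] w)"
    using w by (simp add: pev_pCons)
  also have "\<dots> = a \<cdot>\<^sub>v w + H *\<^sub>v (b \<cdot>\<^sub>v w + H *\<^sub>v w)" using w by (simp add: pev_lin1)
  also have "\<dots> = a \<cdot>\<^sub>v w + (b \<cdot>\<^sub>v (H *\<^sub>v w) + H *\<^sub>v (H *\<^sub>v w))"
    using w by (simp add: H_add H_smult)
  also have "\<dots> = a \<cdot>\<^sub>v w + b \<cdot>\<^sub>v (H *\<^sub>v w) + H *\<^sub>v (H *\<^sub>v w)"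
    using w by (intro eq_vecI) auto
  finally show ?thesis .
qed

lemma no_complex_root:
  assumes v: "v \<in> carrier_vec d" and g: "g \<noteq> 0" "pev H g v = 0\<^sub>v d"
    and minl: "\<And>g'. g' \<noteq> 0 \<Longrightarrow> degree g' < degree g \<Longrightarrow> pev H g' v \<noteq> 0\<^sub>v d"
    and z: "poly (map_poly complex_of_real g) z = 0"
  shows "Im z = 0"
proof (rule ccontr)
  assume y0: "Im z \<noteq> 0"
  define x where "x = Re z"
  define y where "y = Im z"
  define q where "q = [:x^2 + y^2, -2*x, 1:]"
  have q0: "q \<noteq> 0" and dq: "degree q = 2" by (auto simp: q_def)
  define s where "s = g div q"
  define r where "r = g mod q"
  have gsr: "g = s * q + r" using div_mult_mod_eq[of g q] by (simp add: s_def r_def)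
  have "g mod q = 0 \<or> degree (g mod q) < 2" using degree_mod_less[OF q0, of g] dq by simp
  hence degr: "degree r \<le> 1" by (auto simp: r_def)
  have zxy: "z = Complex x y" by (simp add: x_def y_def)
  have pqz: "poly (map_poly complex_of_real q) z = 0"
    by (simp add: q_def map_of_real_pCons zxy complex_eq_iff power2_eq_square algebra_simps)
  have "poly (map_poly complex_of_real r) z = 0"
    using z unfolding gsr by (simp add: of_real_hom.map_poly_hom_add map_of_real_mult pqz)
  moreover obtain c0 c1 where r01: "r = [:c0, c1:]" using deg1_poly[OF degr] by blast
  ultimately have "of_real c0 + z * of_real c1 = 0"
    by (simp add: map_of_real_pCons)
  hence "c0 + x * c1 = 0" "y * c1 = 0" by (simp_all add: complex_eq_iff zxy)
  hence "c1 = 0" "c0 = 0" using y0 by (auto simp: y_def)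
  hence r0: "r = 0" using r01 by simp
  have s0: "s \<noteq> 0" using g gsr r0 by auto
  have "degree g = degree s + 2" using gsr r0 s0 q0 dq by (simp add: degree_mult_eq)
  hence dsl: "degree s < degree g" by simp
  define w where "w = pev H s v"
  have w: "w \<in> carrier_vec d" using v by (simp add: w_def)
  have wne: "w \<noteq> 0\<^sub>v d" unfolding w_def by (rule minl[OF s0 dsl])
  define Hw where "Hw = H *\<^sub>v w"
  have Hw: "Hw \<in> carrier_vec d" using w by (simp add: Hw_def)
  have "pev H q w = pev H g v"
    using v unfolding w_def gsr r0 by (simp add: pev_mult mult.commute)
  hence "pev H q w = 0\<^sub>v d" using g by simp
  hence eq0: "(x^2 + y^2) \<cdot>\<^sub>v w + (-2*x) \<cdot>\<^sub>v Hw + H *\<^sub>v Hw = 0\<^sub>v d"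
    using w unfolding q_def Hw_def by (simp add: pev_quad)
  have "w \<bullet> ((x^2 + y^2) \<cdot>\<^sub>v w + (-2*x) \<cdot>\<^sub>v Hw + H *\<^sub>v Hw) = 0"
    unfolding eq0 using w by simp
  hence "(x^2 + y^2) * (w \<bullet> w) + (-2*x) * (w \<bullet> Hw) + w \<bullet> (H *\<^sub>v Hw) = 0"
    using w Hw by (simp add: scalar_prod_add_distrib[of _ d])
  moreover have "w \<bullet> (H *\<^sub>v Hw) = Hw \<bullet> Hw" using w Hw by (simp add: H_sym Hw_def)
  ultimately have e1: "(x^2 + y^2) * (w \<bullet> w) - 2 * x * (w \<bullet> Hw) + Hw \<bullet> Hw = 0" by simp
  define u where "u = Hw + (-x) \<cdot>\<^sub>v w"
  have u: "u \<in> carrier_vec d" using w Hw by (simp add: u_def)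
  have "u \<bullet> u = Hw \<bullet> Hw - 2 * x * (w \<bullet> Hw) + x^2 * (w \<bullet> w)"
    using w Hw unfolding u_def
    by (simp add: scalar_prod_add_distrib[of _ d] add_scalar_prod_distrib[of _ d]
        comm_scalar_prod[of Hw d w] power2_eq_square algebra_simps)
  with e1 have "y^2 * (w \<bullet> w) = - (u \<bullet> u)" by (simp add: algebra_simps)
  hence "y^2 * (w \<bullet> w) \<le> 0" using sp_self_ge0[of u] by simp
  moreover have "y^2 > 0" using y0 by (simp add: y_def)
  ultimately have "w \<bullet> w \<le> 0" by (simp add: mult_le_0_iff)
  hence "w \<bullet> w = 0" using sp_self_ge0[of w] by simp
  hence "w = 0\<^sub>v d" using sp_self_eq0[OF w] by simp
  with wne show False by simp
qed

lemma decomp_aux: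
  "\<forall>v g. v \<in> carrier_vec d \<longrightarrow> g \<noteq> 0 \<longrightarrow> degree g \<le> k \<longrightarrow> pev H g v = 0\<^sub>v d \<longrightarrow>
     (\<exists>ws. goodl ws \<and> vsum d ws = v \<and> (\<forall>lw\<in>set ws. \<exists>p. snd lw = pev H p v))"
proof (induct k)
  case 0
  show ?case
  proof (intro allI impI)
    fix v g assume v: "v \<in> carrier_vec d" and g: "g \<noteq> 0" "degree g \<le> 0" "pev H g v = 0\<^sub>v d"
    have gc: "g = [:coeff g 0:]" using g(2) by (metis degree_0_id le_zero_eq)
    hence c0: "coeff g 0 \<noteq> 0" using g(1) by auto
    have "coeff g 0 \<cdot>\<^sub>v v = 0\<^sub>v d" using g(3) v by (metis gc pev_const)
    hence "v = 0\<^sub>v d"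
    proof -
      assume a: "coeff g 0 \<cdot>\<^sub>v v = 0\<^sub>v d"
      show "v = 0\<^sub>v d"
      proof (rule eq_vecI)
        fix i assume "i < dim_vec (0\<^sub>v d :: real vec)"
        hence i: "i < d" by simp
        have "(coeff g 0 \<cdot>\<^sub>v v) $ i = 0" using a i by simp
        thus "v $ i = 0\<^sub>v d $ i" using i v c0 by simp
      qed (use v in simp)
    qed
    thus "\<exists>ws. goodl ws \<and> vsum d ws = v \<and> (\<forall>lw\<in>set ws. \<exists>p. snd lw = pev H p v)"
      by (intro exI[of _ "[]"]) (simp add: goodl_def)
  qed
next
  case (Suc k)
  show ?case
  proof (intro allI impI)
    fix v g assume v: "v \<in> carrier_vec d" and g: "g \<noteq> 0" "degree g \<le> Suc k" "pev H g v = 0\<^sub>v d"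
    show "\<exists>ws. goodl ws \<and> vsum d ws = v \<and> (\<forall>lw\<in>set ws. \<exists>p. snd lw = pev H p v)"
    proof (cases "\<exists>g'. g' \<noteq> 0 \<and> degree g' \<le> k \<and> pev H g' v = 0\<^sub>v d")
      case True then show ?thesis using Suc v by blast
    next
      case False
      hence minl: "\<And>g'. g' \<noteq> 0 \<Longrightarrow> degree g' \<le> k \<Longrightarrow> pev H g' v \<noteq> 0\<^sub>v d" by blast
      have dg: "degree g = Suc k" using False g by (metis le_SucE)
      have minl': "\<And>g'. g' \<noteq> 0 \<Longrightarrow> degree g' < degree g \<Longrightarrow> pev H g' v \<noteq> 0\<^sub>v d"
        using minl dg by simp
      have "\<not> constant (poly (map_poly complex_of_real g))"
        using dg by (simp add: constant_degree)
      then obtain z where z: "poly (map_poly complex_of_real g) z = 0"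
        using fundamental_theorem_of_algebra by blast
      have "Im z = 0" by (rule no_complex_root[OF v g(1) g(3) minl' z])
      define \<alpha> where "\<alpha> = Re z"
      have "z = of_real \<alpha>" using \<open>Im z = 0\<close> by (simp add: \<alpha>_def complex_eq_iff)
      hence "of_real (poly g \<alpha>) = (0::complex)" using z by (simp add: of_real_hom.poly_map_poly)
      hence "poly g \<alpha> = 0" by simp
      then obtain f where gf: "g = [:-\<alpha>, 1:] * f" using poly_eq_0_iff_dvd by (metis dvdE)
      have f0: "f \<noteq> 0" using g(1) gf by auto
      have "degree g = degree [:-\<alpha>, 1:] + degree f" unfolding gf
        by (rule degree_mult_eq) (use f0 in auto)
      hence df: "degree f \<le> k" using dg by simp
      define u where "u = pev H f v"
      have u: "u \<in> carrier_vec d" using v by (simp add: u_def)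
      have une: "u \<noteq> 0\<^sub>v d" unfolding u_def by (rule minl[OF f0 df])
      have "pev H [:-\<alpha>, 1:] u = pev H g v" unfolding u_def gf using v by (simp only: pev_mult)
      hence "pev H [:-\<alpha>, 1:] u = 0\<^sub>v d" using g(3) by simp
      hence "(-\<alpha>) \<cdot>\<^sub>v u + H *\<^sub>v u = 0\<^sub>v d" using u by (simp add: pev_lin1)
      hence Hu: "H *\<^sub>v u = \<alpha> \<cdot>\<^sub>v u"
      proof -
        assume a: "(-\<alpha>) \<cdot>\<^sub>v u + H *\<^sub>v u = 0\<^sub>v d"
        show ?thesis
        proof (rule eq_vecI)
          fix i assume "i < dim_vec (\<alpha> \<cdot>\<^sub>v u)"
          hence i: "i < d" using u by simp
          have "((-\<alpha>) \<cdot>\<^sub>v u + H *\<^sub>v u) $ i = 0" using a i by simp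
          thus "(H *\<^sub>v u) $ i = (\<alpha> \<cdot>\<^sub>v u) $ i" using i u by simp
        qed (use u in simp)
      qed
      define fa where "fa = poly f \<alpha>"
      have "u \<bullet> u = u \<bullet> pev H f v" by (simp add: u_def)
      also have "\<dots> = pev H f u \<bullet> v" using u v by (rule pev_sym)
      also have "\<dots> = (fa \<cdot>\<^sub>v u) \<bullet> v" using pev_eigen[OF u Hu] by (simp add: fa_def)
      also have "\<dots> = fa * (u \<bullet> v)" using u v by simp
      finally have uu: "u \<bullet> u = fa * (u \<bullet> v)" .
      have uu0: "u \<bullet> u \<noteq> 0" using sp_self_eq0[OF u] une by blast
      define c where "c = (v \<bullet> u) / (u \<bullet> u)"
      have vu: "v \<bullet> u = u \<bullet> v" using u v by (simp add: comm_scalar_prod[of u d v])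
      have cfa: "c * fa = 1" using uu uu0 by (simp add: c_def vu field_simps)
      define v' where "v' = v + (-c) \<cdot>\<^sub>v u"
      have v': "v' \<in> carrier_vec d" using u v by (simp add: v'_def)
      have v'p: "v' = pev H (1 + Polynomial.smult (-c) f) v"
        unfolding v'_def u_def by (simp only: pev_add[OF v] pev_one[OF v] pev_smult[OF v])
      have "pev H f v' = u + (-c) \<cdot>\<^sub>v (fa \<cdot>\<^sub>v u)"
        using u v by (simp add: v'_def pev_add_vec pev_smult_vec pev_eigen[OF u Hu] fa_def u_def[symmetric])
      also have "\<dots> = 0\<^sub>v d"
        using u cfa by (intro eq_vecI) (auto simp: algebra_simps)
      finally have "pev H f v' = 0\<^sub>v d" .
      then obtain ws' where ws': "goodl ws'" "vsum d ws' = v'" "\<forall>lw\<in>set ws'. \<exists>p. snd lw = pev H p v'"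
        using Suc v' f0 df by blast
      have uv': "u \<bullet> v' = 0"
        using u v uu0 by (simp add: v'_def scalar_prod_add_distrib[of _ d] c_def vu)
      define ws where "ws = (\<alpha>, c \<cdot>\<^sub>v u) # ws'"
      have "goodl ws"
        unfolding goodl_def ws_def
      proof (intro conjI)
        show "\<forall>lw\<in>set ((\<alpha>, c \<cdot>\<^sub>v u) # ws'). snd lw \<in> carrier_vec d \<and> H *\<^sub>v snd lw = fst lw \<cdot>\<^sub>v snd lw"
        proof -
          have "H *\<^sub>v (c \<cdot>\<^sub>v u) = \<alpha> \<cdot>\<^sub>v (c \<cdot>\<^sub>v u)"
            using u by (simp add: H_smult Hu) (intro eq_vecI, auto)
          thus ?thesis using ws'(1) u by (auto simp: goodl_def)
        qed
        show "sorted_wrt (\<lambda>x y. snd x \<bullet> snd y = 0) ((\<alpha>, c \<cdot>\<^sub>v u) # ws')"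
        proof -
          have o: "\<forall>lw\<in>set ws'. (c \<cdot>\<^sub>v u) \<bullet> snd lw = 0"
          proof
            fix lw assume "lw \<in> set ws'"
            then obtain p where wp: "snd lw = pev H p v'" using ws'(3) by blast
            have "(c \<cdot>\<^sub>v u) \<bullet> snd lw = c * (u \<bullet> pev H p v')" using u v' wp by simp
            also have "u \<bullet> pev H p v' = pev H p u \<bullet> v'" using u v' by (rule pev_sym)
            also have "\<dots> = poly p \<alpha> * (u \<bullet> v')" using pev_eigen[OF u Hu] u v' by simp
            finally show "(c \<cdot>\<^sub>v u) \<bullet> snd lw = 0" using uv' by simp
          qed
          thus ?thesis using ws'(1) by (simp add: goodl_def)
        qed
      qed
      moreover have "vsum d ws = v"
        unfolding ws_def using ws'(2) u v by (simp add: v'_def) (intro eq_vecI, auto)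
      moreover have "\<forall>lw\<in>set ws. \<exists>p. snd lw = pev H p v"
      proof
        fix lw assume "lw \<in> set ws"
        hence "lw = (\<alpha>, c \<cdot>\<^sub>v u) \<or> lw \<in> set ws'" by (simp add: ws_def)
        thus "\<exists>p. snd lw = pev H p v"
        proof
          assume "lw = (\<alpha>, c \<cdot>\<^sub>v u)"
          thus ?thesis using v by (intro exI[of _ "Polynomial.smult c f"]) (simp add: pev_smult u_def)
        next
          assume "lw \<in> set ws'"
          then obtain p where "snd lw = pev H p v'" using ws'(3) by blast
          hence "snd lw = pev H (p * (1 + Polynomial.smult (-c) f)) v"
            using v by (simp add: pev_mult v'p)
          thus ?thesis by blast
        qed
      qed
      ultimately show ?thesis by blast
    qed
  qed
qed

lemma decomp: assumes v: "v \<in> carrier_vec d"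
  shows "\<exists>ws. goodl ws \<and> vsum d ws = v"
  using annih[OF v] decomp_aux[of d] v by blast

definition lsum :: "(real \<Rightarrow> real) \<Rightarrow> (real \<times> real vec) list \<Rightarrow> real vec" where
  "lsum f ws = foldr (\<lambda>lw acc. f (fst lw) \<cdot>\<^sub>v snd lw + acc) ws (0\<^sub>v d)"

lemma lsum_Nil[simp]: "lsum f [] = 0\<^sub>v d" by (simp add: lsum_def)
lemma lsum_Cons[simp]: "lsum f (lw # ws) = f (fst lw) \<cdot>\<^sub>v snd lw + lsum f ws" by (simp add: lsum_def)

definition carr :: "(real \<times> real vec) list \<Rightarrow> bool" where
  "carr ws \<longleftrightarrow> (\<forall>lw\<in>set ws. snd lw \<in> carrier_vec d)"

lemma goodl_carr: "goodl ws \<Longrightarrow> carr ws" by (auto simp: goodl_def carr_def)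

lemma lsum_carrier[simp]: "carr ws \<Longrightarrow> lsum f ws \<in> carrier_vec d"
  by (induct ws) (auto simp: carr_def)

lemma lsum_dim[simp]: "carr ws \<Longrightarrow> dim_vec (lsum f ws) = d"
  using lsum_carrier carrier_vecD by blast

lemma lsum_idx: "carr ws \<Longrightarrow> i < d \<Longrightarrow> lsum f ws $ i = (\<Sum>lw\<leftarrow>ws. f (fst lw) * snd lw $ i)"
proof (induct ws)
  case Nil then show ?case by simp
next
  case (Cons lw ws)
  then have "carr ws" "dim_vec (snd lw) = d" by (auto simp: carr_def)
  with Cons show ?case by simp
qed

lemma vsum_lsum: "carr ws \<Longrightarrow> vsum d ws = lsum (\<lambda>_. 1) ws"
proof (induct ws)
  case Nil then show ?case by simp
next
  case (Cons lw ws)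
  then have "carr ws" "snd lw \<in> carrier_vec d" by (auto simp: carr_def)
  with Cons show ?case by simp
qed

lemma lsum_H: "goodl ws \<Longrightarrow> H *\<^sub>v lsum f ws = lsum (\<lambda>l. l * f l) ws"
proof (induct ws)
  case Nil then show ?case by simp
next
  case (Cons lw ws)
  then have g: "goodl ws" and w: "snd lw \<in> carrier_vec d" and e: "H *\<^sub>v snd lw = fst lw \<cdot>\<^sub>v snd lw"
    by (auto simp: goodl_def)
  have c: "carr ws" using g by (rule goodl_carr)
  have "H *\<^sub>v lsum f (lw # ws) = f (fst lw) \<cdot>\<^sub>v (fst lw \<cdot>\<^sub>v snd lw) + lsum (\<lambda>l. l * f l) ws"
    using Cons(1)[OF g] w c by (simp add: H_add H_smult e)
  also have "\<dots> = lsum (\<lambda>l. l * f l) (lw # ws)"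
    using w c carrier_vecD[OF w] by simp (intro eq_vecI, auto)
  finally show ?case .
qed

lemma lsum_sp: "w \<in> carrier_vec d \<Longrightarrow> carr ws \<Longrightarrow> w \<bullet> lsum f ws = (\<Sum>lw\<leftarrow>ws. f (fst lw) * (w \<bullet> snd lw))"
proof (induct ws)
  case Nil then show ?case by simp
next
  case (Cons lw ws)
  then have "carr ws" "snd lw \<in> carrier_vec d" by (auto simp: carr_def)
  with Cons show ?case by (simp add: scalar_prod_add_distrib[of _ d])
qed

lemma lsum_sp0: "w \<in> carrier_vec d \<Longrightarrow> carr ws \<Longrightarrow> \<forall>y\<in>set ws. w \<bullet> snd y = 0 \<Longrightarrow> w \<bullet> lsum f ws = 0"
proof (induct ws)
  case Nil then show ?case by simp
next
  case (Cons lw ws)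
  then have "carr ws" "snd lw \<in> carrier_vec d" by (auto simp: carr_def)
  with Cons show ?case by (simp add: scalar_prod_add_distrib[of _ d])
qed

lemma lsum_norm2: "goodl ws \<Longrightarrow>
   lsum f ws \<bullet> lsum f ws = (\<Sum>lw\<leftarrow>ws. (f (fst lw))^2 * (snd lw \<bullet> snd lw))"
proof (induct ws)
  case Nil then show ?case by simp
next
  case (Cons lw ws)
  then have g: "goodl ws" and w: "snd lw \<in> carrier_vec d"
    and o: "\<forall>y\<in>set ws. snd lw \<bullet> snd y = 0"
    by (auto simp: goodl_def)
  have c: "carr ws" using g by (rule goodl_carr)
  have ws0: "snd lw \<bullet> lsum f ws = 0" by (rule lsum_sp0[OF w c o])
  have ws0': "lsum f ws \<bullet> snd lw = 0" using ws0 comm_scalar_prod[OF w lsum_carrier[OF c]] by simp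
  define a where "a = f (fst lw)"
  have "lsum f (lw # ws) \<bullet> lsum f (lw # ws) =
     (a \<cdot>\<^sub>v snd lw + lsum f ws) \<bullet> (a \<cdot>\<^sub>v snd lw + lsum f ws)" by (simp add: a_def)
  also have "\<dots> = a^2 * (snd lw \<bullet> snd lw) + lsum f ws \<bullet> lsum f ws"
    using w c ws0 ws0'
    by (simp add: scalar_prod_add_distrib[of _ d] add_scalar_prod_distrib[of _ d] power2_eq_square)
  finally show ?case using Cons(1)[OF g] by (simp add: a_def)
qed

lemma lsum_bound:
  assumes g: "goodl ws" and B: "\<And>lw. lw \<in> set ws \<Longrightarrow> snd lw \<noteq> 0\<^sub>v d \<Longrightarrow> \<bar>f (fst lw)\<bar> \<le> B"
  shows "lsum f ws \<bullet> lsum f ws \<le> B^2 * (vsum d ws \<bullet> vsum d ws)"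
proof -
  have c: "carr ws" using g by (rule goodl_carr)
  have "lsum f ws \<bullet> lsum f ws = (\<Sum>lw\<leftarrow>ws. (f (fst lw))^2 * (snd lw \<bullet> snd lw))"
    by (rule lsum_norm2[OF g])
  also have "\<dots> \<le> (\<Sum>lw\<leftarrow>ws. B^2 * (snd lw \<bullet> snd lw))"
  proof (rule sum_list_mono)
    fix lw assume lw: "lw \<in> set ws"
    show "(f (fst lw))^2 * (snd lw \<bullet> snd lw) \<le> B^2 * (snd lw \<bullet> snd lw)"
    proof (cases "snd lw = 0\<^sub>v d")
      case True then show ?thesis by simp
    next
      case False
      hence "\<bar>f (fst lw)\<bar> \<le> B" using B lw by blast
      hence "(f (fst lw))^2 \<le> B^2"
        by (metis abs_ge_zero order_trans power2_abs power_mono)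
      thus ?thesis using sp_self_ge0[of "snd lw"] by (rule mult_right_mono)
    qed
  qed
  also have "\<dots> = B^2 * (\<Sum>lw\<leftarrow>ws. (1::real)^2 * (snd lw \<bullet> snd lw))"
    by (simp add: sum_list_const_mult)
  also have "(\<Sum>lw\<leftarrow>ws. (1::real)^2 * (snd lw \<bullet> snd lw)) = vsum d ws \<bullet> vsum d ws"
    using lsum_norm2[OF g, of "\<lambda>_. 1"] vsum_lsum[OF c] by simp
  finally show ?thesis .
qed

lemma goodl_eigen: "goodl ws \<Longrightarrow> lw \<in> set ws \<Longrightarrow> snd lw \<noteq> 0\<^sub>v d \<Longrightarrow> eigenvalue H (fst lw)"
  unfolding goodl_def eigenvalue_def eigenvector_def by auto

lemma hb_carrier2: "x0 \<in> carrier_vec d \<Longrightarrow> xs \<in> carrier_vec d \<Longrightarrow>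
   hb_iter hh m K H xs x0 t \<in> carrier_vec d \<and> hb_iter hh m K H xs x0 (Suc t) \<in> carrier_vec d"
  by (induct t) auto

lemma hb_carrier: "x0 \<in> carrier_vec d \<Longrightarrow> xs \<in> carrier_vec d \<Longrightarrow> hb_iter hh m K H xs x0 t \<in> carrier_vec d"
  using hb_carrier2 by blast

lemma poly_res_SS: "poly (res_poly hh m K (Suc (Suc t))) l =
   (1 + m - hh (Suc t mod K) * l) * poly (res_poly hh m K (Suc t)) l - m * poly (res_poly hh m K t) l"
  by (simp add: algebra_simps)

lemma poly_res_1: "poly (res_poly hh m K (Suc 0)) l = 1 - hh 0 / (1 + m) * l"
  by (simp add: algebra_simps)

lemma hb_rep:
  assumes g: "goodl ws" and xs: "xs \<in> carrier_vec d" and x0: "x0 \<in> carrier_vec d"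
    and x0ws: "x0 - xs = vsum d ws"
  shows "hb_iter hh m K H xs x0 t - xs = lsum (\<lambda>l. poly (res_poly hh m K t) l) ws"
proof -
  have c: "carr ws" using g by (rule goodl_carr)
  let ?x = "hb_iter hh m K H xs x0"
  let ?P = "\<lambda>t l. poly (res_poly hh m K t) l"
  have xc: "?x t \<in> carrier_vec d" for t using hb_carrier[OF x0 xs] .
  have [simp]: "dim_vec (?x t) = d" for t using xc[of t] by auto
  have [simp]: "dim_vec xs = d" "dim_vec x0 = d" using xs x0 by auto
  have ix: "?x t $ i - xs $ i = (\<Sum>lw\<leftarrow>ws. ?P t (fst lw) * snd lw $ i)"
    if "?x t - xs = lsum (?P t) ws" "i < d" for t i
  proof -
    have "(?x t - xs) $ i = lsum (?P t) ws $ i" using that by simp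
    thus ?thesis using that(2) c by (simp add: lsum_idx)
  qed
  have iH: "(H *\<^sub>v (?x t - xs)) $ i = (\<Sum>lw\<leftarrow>ws. fst lw * ?P t (fst lw) * snd lw $ i)"
    if "?x t - xs = lsum (?P t) ws" "i < d" for t i
    using that c by (simp add: lsum_H[OF g] lsum_idx mult.assoc)
  have "?x t - xs = lsum (?P t) ws \<and> ?x (Suc t) - xs = lsum (?P (Suc t)) ws"
  proof (induct t)
    case 0
    have e0: "?x 0 - xs = lsum (?P 0) ws" using x0ws vsum_lsum[OF c] by simp
    have "?x (Suc 0) - xs = lsum (?P (Suc 0)) ws"
    proof (rule eq_vecI)
      fix i assume "i < dim_vec (lsum (?P (Suc 0)) ws)"
      hence i: "i < d" using c by simp
      define c0 where "c0 = hh 0 / (1 + m)"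
      have "(?x (Suc 0) - xs) $ i = (x0 $ i - xs $ i) - c0 * (H *\<^sub>v (x0 - xs)) $ i"
        using i x0 xs by (simp add: c0_def)
      also have "\<dots> = (\<Sum>lw\<leftarrow>ws. 1 * snd lw $ i) - c0 * (\<Sum>lw\<leftarrow>ws. fst lw * 1 * snd lw $ i)"
        using ix[OF e0 i] iH[OF e0 i] by simp
      also have "\<dots> = (\<Sum>lw\<leftarrow>ws. (1 - c0 * fst lw) * snd lw $ i)"
        by (simp add: algebra_simps sum_list_subtractf sum_list_const_mult)
      also have "\<dots> = (\<Sum>lw\<leftarrow>ws. ?P (Suc 0) (fst lw) * snd lw $ i)"
        by (simp add: poly_res_1 c0_def mult.commute)
      finally show "(?x (Suc 0) - xs) $ i = lsum (?P (Suc 0)) ws $ i"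
        using i c by (simp add: lsum_idx)
    qed (use c in simp)
    with e0 show ?case by simp
  next
    case (Suc t)
    have e0: "?x t - xs = lsum (?P t) ws" and e1: "?x (Suc t) - xs = lsum (?P (Suc t)) ws"
      using Suc by auto
    have "?x (Suc (Suc t)) - xs = lsum (?P (Suc (Suc t))) ws"
    proof (rule eq_vecI)
      fix i assume "i < dim_vec (lsum (?P (Suc (Suc t))) ws)"
      hence i: "i < d" using c by simp
      have "(?x (Suc (Suc t)) - xs) $ i = (1 + m) * (?x (Suc t) $ i - xs $ i)
          - hh (Suc t mod K) * (H *\<^sub>v (?x (Suc t) - xs)) $ i - m * (?x t $ i - xs $ i)"
        using i x0 xs by (simp add: algebra_simps)
      also have "\<dots> = (1 + m) * (\<Sum>lw\<leftarrow>ws. ?P (Suc t) (fst lw) * snd lw $ i)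
          - hh (Suc t mod K) * (\<Sum>lw\<leftarrow>ws. fst lw * ?P (Suc t) (fst lw) * snd lw $ i)
          - m * (\<Sum>lw\<leftarrow>ws. ?P t (fst lw) * snd lw $ i)"
        using ix[OF e0 i] iH[OF e1 i] ix[OF e1 i] by simp
      also have "\<dots> = (\<Sum>lw\<leftarrow>ws. (1 + m) * (?P (Suc t) (fst lw) * snd lw $ i)
          - hh (Suc t mod K) * (fst lw * ?P (Suc t) (fst lw) * snd lw $ i)
          - m * (?P t (fst lw) * snd lw $ i))"
        by (simp only: sum_list_subtractf sum_list_const_mult)
      also have "\<dots> = (\<Sum>lw\<leftarrow>ws. ?P (Suc (Suc t)) (fst lw) * snd lw $ i)"
        by (intro arg_cong[where f=sum_list] map_cong refl) (simp only: poly_res_SS algebra_simps)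
      finally show "(?x (Suc (Suc t)) - xs) $ i = lsum (?P (Suc (Suc t))) ws $ i"
        using i c by (simp add: lsum_idx)
    qed (use c in simp)
    with e1 show ?case by simp
  qed
  thus ?thesis by simp
qed

end

lemma rate_bound:
  assumes H: "H \<in> carrier_mat d d" and sy: "transpose_mat H = H"
    and ev: "\<forall>l. eigenvalue H l \<longrightarrow> l \<in> Lam"
    and xs: "xs \<in> carrier_vec d" and x0: "x0 \<in> carrier_vec d"
    and B: "\<forall>l\<in>Lam. \<bar>poly (res_poly h m K t) l\<bar> \<le> B" and B0: "0 \<le> B"
  shows "vnorm (hb_iter h m K H xs x0 t - xs) \<le> B * vnorm (x0 - xs)"
proof -
  interpret symH d H using H sy by unfold_locales
  obtain ws where g: "goodl ws" and vs: "vsum d ws = x0 - xs"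
    using decomp[of "x0 - xs"] x0 xs by auto
  have rep: "hb_iter h m K H xs x0 t - xs = lsum (\<lambda>l. poly (res_poly h m K t) l) ws"
    using hb_rep[OF g xs x0 vs[symmetric]] .
  have "lsum (\<lambda>l. poly (res_poly h m K t) l) ws \<bullet> lsum (\<lambda>l. poly (res_poly h m K t) l) ws
      \<le> B^2 * (vsum d ws \<bullet> vsum d ws)"
  proof (rule lsum_bound[OF g])
    fix lw assume "lw \<in> set ws" "snd lw \<noteq> 0\<^sub>v d"
    hence "eigenvalue H (fst lw)" using goodl_eigen[OF g] by blast
    hence "fst lw \<in> Lam" using ev by blast
    thus "\<bar>poly (res_poly h m K t) (fst lw)\<bar> \<le> B" using B by blast
  qed
  hence "vnorm (hb_iter h m K H xs x0 t - xs) \<le> sqrt (B^2 * ((x0 - xs) \<bullet> (x0 - xs)))"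
    unfolding vnorm_def rep vs by simp
  also have "\<dots> = B * vnorm (x0 - xs)" using B0 by (simp add: vnorm_def real_sqrt_mult)
  finally show ?thesis .
qed




type_synonym 'a m2 = "'a \<times> 'a \<times> 'a \<times> 'a"

fun mul2 :: "'a::comm_ring_1 m2 \<Rightarrow> 'a m2 \<Rightarrow> 'a m2" where
  "mul2 (a, b, c, d) (e, f, g, h) = (a*e + b*g, a*f + b*h, c*e + d*g, c*f + d*h)"

fun tr2 :: "'a::comm_ring_1 m2 \<Rightarrow> 'a" where "tr2 (a, b, c, d) = a + d"
fun det2 :: "'a::comm_ring_1 m2 \<Rightarrow> 'a" where "det2 (a, b, c, d) = a * d - b * c"
fun app2 :: "'a::comm_ring_1 m2 \<Rightarrow> 'a \<times> 'a \<Rightarrow> 'a \<times> 'a" where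
  "app2 (a, b, c, d) (u, v) = (a*u + b*v, c*u + d*v)"

definition id2 :: "'a::comm_ring_1 m2" where "id2 = (1, 0, 0, 1)"

lemma det2_mul: "det2 (mul2 X Y) = det2 X * det2 Y"
  by (cases X; cases Y) (simp add: algebra_simps)

lemma app2_mul: "app2 (mul2 X Y) w = app2 X (app2 Y w)"
  by (cases X; cases Y; cases w) (simp add: algebra_simps)

lemma cayley2: "app2 X (app2 X w) = (tr2 X * fst (app2 X w) - det2 X * fst w,
                                     tr2 X * snd (app2 X w) - det2 X * snd w)"
  by (cases X; cases w) (simp add: algebra_simps)

lemma cayley2m: "mul2 X (mul2 X Y) = (let Z = mul2 X Y in
   (tr2 X * fst Z - det2 X * fst Y, tr2 X * fst (snd Z) - det2 X * fst (snd Y),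
    tr2 X * fst (snd (snd Z)) - det2 X * fst (snd (snd Y)),
    tr2 X * snd (snd (snd Z)) - det2 X * snd (snd (snd Y))))"
  by (cases X; cases Y) (simp add: algebra_simps Let_def)

definition to2 :: "real mat \<Rightarrow> real m2" where
  "to2 A = (A $$ (0,0), A $$ (0,1), A $$ (1,0), A $$ (1,1))"

lemma to2_mult: assumes "A \<in> carrier_mat 2 2" "B \<in> carrier_mat 2 2"
  shows "to2 (A * B) = mul2 (to2 A) (to2 B)"
proof -
  have s2: "(\<Sum>k\<in>{0..<2}. f k) = f 0 + f 1" for f :: "nat \<Rightarrow> real"
    by (simp add: numeral_2_eq_2)
  show ?thesis using assms by (simp add: to2_def scalar_prod_def s2 del: One_nat_def)
qed

lemma to2_one: "to2 (1\<^sub>m 2) = id2"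
  by (simp add: to2_def id2_def)

lemma len2: "length [x, y] = 2" by simp

lemma link_mat_carrier: "link_mat h m K lam i \<in> carrier_mat 2 2"
  unfolding link_mat_def mat_of_rows_list_def len2 by (rule mat_carrier)

lemma to2_link_mat: "to2 (link_mat h m K lam i) = ((1 + m - h (K - i) * lam) / sqrt m, -1, 1, 0)"
  unfolding link_mat_def mat_of_rows_list_def to2_def by (simp del: One_nat_def)

definition Mp :: "(nat \<Rightarrow> real) \<Rightarrow> real \<Rightarrow> real \<Rightarrow> nat \<Rightarrow> real m2" where
  "Mp h m lam i = ((1 + m - h i * lam) / sqrt m, -1, 1, 0)"

fun Gp :: "(nat \<Rightarrow> real) \<Rightarrow> real \<Rightarrow> real \<Rightarrow> nat \<Rightarrow> real m2" where
  "Gp h m lam 0 = id2"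
| "Gp h m lam (Suc j) = mul2 (Mp h m lam j) (Gp h m lam j)"

lemma foldr_link: assumes "j \<le> K"
  shows "foldr (\<lambda>i A. link_mat h m K lam i * A) [K + 1 - j..<K + 1] (1\<^sub>m 2) \<in> carrier_mat 2 2 \<and>
    to2 (foldr (\<lambda>i A. link_mat h m K lam i * A) [K + 1 - j..<K + 1] (1\<^sub>m 2)) = Gp h m lam j"
  using assms
proof (induct j)
  case 0 then show ?case by (simp add: to2_one)
next
  case (Suc j)
  have ups: "[K + 1 - Suc j..<K + 1] = (K - j) # [K + 1 - j..<K + 1]"
  proof -
    have e1: "K + 1 - Suc j = K - j" by simp
    have e2: "Suc (K - j) = K + 1 - j" using Suc(2) by simp
    show ?thesis unfolding e1 by (subst upt_conv_Cons) (use Suc(2) e2 in auto)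
  qed
  from Suc have IH: "foldr (\<lambda>i A. link_mat h m K lam i * A) [K + 1 - j..<K + 1] (1\<^sub>m 2) \<in> carrier_mat 2 2"
     "to2 (foldr (\<lambda>i A. link_mat h m K lam i * A) [K + 1 - j..<K + 1] (1\<^sub>m 2)) = Gp h m lam j" by auto
  have kj: "K - (K - j) = j" using Suc(2) by simp
  show ?case unfolding ups using IH link_mat_carrier[of h m K lam "K - j"]
    by (simp add: to2_mult to2_link_mat kj Mp_def del: One_nat_def)
qed

lemma link_sigma_Gp: "link_sigma h m K lam = tr2 (Gp h m lam K) / 2"
proof -
  have "[1..<K+1] = [K + 1 - K..<K + 1]" by simp
  hence "to2 (foldr (\<lambda>i A. link_mat h m K lam i * A) [1..<K + 1] (1\<^sub>m 2)) = Gp h m lam K"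
    using foldr_link[of K K h m lam] by simp
  thus ?thesis unfolding link_sigma_def trace2_def
    by (cases "Gp h m lam K") (simp add: to2_def del: One_nat_def)
qed


lemma tr2_cayley: "tr2 (mul2 X (mul2 X Y)) = tr2 X * tr2 (mul2 X Y) - det2 X * tr2 Y"
  by (cases X; cases Y) (simp add: algebra_simps)

subsection \<open>Polynomiality\<close>

definition Mpp :: "(nat \<Rightarrow> real) \<Rightarrow> real \<Rightarrow> nat \<Rightarrow> real poly m2" where
  "Mpp h m i = ([:(1 + m) / sqrt m, - h i / sqrt m:], -1, 1, 0)"

fun Gpp :: "(nat \<Rightarrow> real) \<Rightarrow> real \<Rightarrow> nat \<Rightarrow> real poly m2" where
  "Gpp h m 0 = id2"
| "Gpp h m (Suc j) = mul2 (Mpp h m j) (Gpp h m j)"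

fun ev2 :: "real \<Rightarrow> real poly m2 \<Rightarrow> real m2" where
  "ev2 lam (a, b, c, d) = (poly a lam, poly b lam, poly c lam, poly d lam)"

fun deg2 :: "real poly m2 \<Rightarrow> nat \<Rightarrow> bool" where
  "deg2 (a, b, c, d) n \<longleftrightarrow> degree a \<le> n \<and> degree b \<le> n \<and> degree c \<le> n \<and> degree d \<le> n"

lemma ev2_mul: "ev2 lam (mul2 X Y) = mul2 (ev2 lam X) (ev2 lam Y)"
  by (cases X; cases Y) simp

lemma ev2_Gpp: "ev2 lam (Gpp h m j) = Gp h m lam j"
  by (induct j) (simp_all add: ev2_mul id2_def Mpp_def Mp_def diff_divide_distrib add_divide_distrib mult.commute)

lemma deg_add_mult: assumes "degree (a::real poly) \<le> 1" "degree e \<le> j" "degree b = 0" "degree g \<le> j"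
  shows "degree (a * e + b * g) \<le> Suc j"
proof -
  have "degree (a * e) \<le> Suc j" using degree_mult_le[of a e] assms by simp
  moreover have "degree (b * g) \<le> Suc j" using degree_mult_le[of b g] assms by simp
  ultimately show ?thesis using degree_add_le by blast
qed

lemma deg2_Gpp: "deg2 (Gpp h m j) j"
proof (induct j)
  case 0 then show ?case by (simp add: id2_def)
next
  case (Suc j)
  obtain a b c d where G: "Gpp h m j = (a, b, c, d)" by (cases "Gpp h m j") auto
  with Suc have "degree a \<le> j" "degree b \<le> j" "degree c \<le> j" "degree d \<le> j" by auto
  moreover have "degree [:(1 + m) / sqrt m, - h j / sqrt m:] \<le> 1" by simp
  ultimately show ?case unfolding Gpp.simps G Mpp_def mul2.simps deg2.simps
    by (intro conjI deg_add_mult) auto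
qed

lemma link_sigma_poly: "\<exists>q. degree q \<le> K \<and> (\<forall>lam. link_sigma h m K lam = poly q lam)"
proof -
  obtain a b c d where G: "Gpp h m K = (a, b, c, d)" by (cases "Gpp h m K") auto
  have "deg2 (Gpp h m K) K" by (rule deg2_Gpp)
  hence da: "degree (Polynomial.smult (1/2) (a + d)) \<le> K" using G
    by (simp add: degree_add_le)
  have "link_sigma h m K lam = poly (Polynomial.smult (1/2) (a + d)) lam" for lam
    using G by (simp add: link_sigma_Gp ev2_Gpp[symmetric])
  with da show ?thesis by blast
qed

subsection \<open>Value at zero\<close>

lemma Gp0_trace: assumes m: "0 < m"
  shows "tr2 (Gp h m 0 j) = sqrt m ^ j + 1 / sqrt m ^ j"
proof -
  define s where "s = sqrt m"
  have s: "s > 0" "s * s = m" using m by (auto simp: s_def)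
  define X :: "real m2" where "X = ((1 + m) / s, -1, 1, 0)"
  have MX: "Mp h m 0 i = X" for i by (simp add: Mp_def X_def s_def)
  have trX: "tr2 X = s + 1 / s" using s by (simp add: X_def field_simps)
  have detX: "det2 X = 1" by (simp add: X_def)
  have "tr2 (Gp h m 0 j) = s ^ j + 1 / s ^ j \<and> tr2 (Gp h m 0 (Suc j)) = s ^ Suc j + 1 / s ^ Suc j"
  proof (induct j)
    case 0 then show ?case using trX by (simp add: id2_def MX X_def)
  next
    case (Suc j)
    have "tr2 (Gp h m 0 (Suc (Suc j))) = tr2 X * tr2 (Gp h m 0 (Suc j)) - det2 X * tr2 (Gp h m 0 j)"
      by (simp add: MX tr2_cayley)
    also have "\<dots> = (s + 1 / s) * (s ^ Suc j + 1 / s ^ Suc j) - (s ^ j + 1 / s ^ j)"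
      using Suc trX detX by simp
    also have "\<dots> = s ^ Suc (Suc j) + 1 / s ^ Suc (Suc j)"
      using s(1) by (simp add: field_simps)
    finally show ?case using Suc by simp
  qed
  thus ?thesis by (simp add: s_def)
qed

subsection \<open>Residual polynomials\<close>

definition Am :: "(nat \<Rightarrow> real) \<Rightarrow> real \<Rightarrow> real \<Rightarrow> nat \<Rightarrow> real m2" where
  "Am h m lam i = (1 + m - h i * lam, -m, 1, 0)"

fun Cp :: "(nat \<Rightarrow> real) \<Rightarrow> real \<Rightarrow> real \<Rightarrow> nat \<Rightarrow> real m2" where
  "Cp h m lam 0 = id2"
| "Cp h m lam (Suc j) = mul2 (Am h m lam j) (Cp h m lam j)"

definition pv :: "(nat \<Rightarrow> real) \<Rightarrow> real \<Rightarrow> nat \<Rightarrow> real \<Rightarrow> nat \<Rightarrow> real" where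
  "pv h m K lam t = poly (res_poly h m K t) lam"

definition Wv :: "(nat \<Rightarrow> real) \<Rightarrow> real \<Rightarrow> nat \<Rightarrow> real \<Rightarrow> nat \<Rightarrow> real \<times> real" where
  "Wv h m K lam t = (pv h m K lam t, if t = 0 then pv h m K lam 1 else pv h m K lam (t - 1))"

lemma Wv_step: assumes m: "0 < m"
  shows "Wv h m K lam (Suc t) = app2 (Am h m lam (t mod K)) (Wv h m K lam t)"
proof (cases t)
  case 0
  have "1 + m \<noteq> 0" using m by simp
  then show ?thesis using 0 by (simp add: Wv_def Am_def pv_def field_simps)
next
  case (Suc t')
  then show ?thesis by (simp add: Wv_def Am_def pv_def algebra_simps)
qed

lemma Wv_block: assumes m: "0 < m" and j: "j \<le> K"
  shows "Wv h m K lam (n * K + j) = app2 (Cp h m lam j) (Wv h m K lam (n * K))"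
  using j
proof (induct j)
  case 0 then show ?case by (cases "Wv h m K lam (n * K)") (simp add: id2_def)
next
  case (Suc j)
  have jK: "j < K" using Suc(2) by simp
  have md: "(n * K + j) mod K = j" using jK by simp
  have "Wv h m K lam (n * K + Suc j) = app2 (Am h m lam j) (Wv h m K lam (n * K + j))"
    using Wv_step[OF m, of h K lam "n * K + j"] md by simp
  also have "\<dots> = app2 (Cp h m lam (Suc j)) (Wv h m K lam (n * K))"
    using Suc jK by (simp add: app2_mul)
  finally show ?case .
qed

lemma Cp_Gp: assumes m: "0 < m"
  shows "Gp h m lam j = (g1, g2, g3, g4) \<Longrightarrow>
    Cp h m lam j = (sqrt m ^ j * g1, sqrt m ^ j * sqrt m * g2, sqrt m ^ j / sqrt m * g3, sqrt m ^ j * g4)"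
proof (induct j arbitrary: g1 g2 g3 g4)
  case 0 then show ?case by (auto simp: id2_def)
next
  case (Suc j)
  define s where "s = sqrt m"
  have s: "s > 0" "s * s = m" using m by (auto simp: s_def)
  obtain a b c d where G: "Gp h m lam j = (a, b, c, d)" by (cases "Gp h m lam j") auto
  have C: "Cp h m lam j = (s ^ j * a, s ^ j * s * b, s ^ j / s * c, s ^ j * d)"
    using Suc(1)[OF G] by (simp add: s_def)
  have g: "(g1, g2, g3, g4) = mul2 ((1 + m - h j * lam) / s, -1, 1, 0) (a, b, c, d)"
    using Suc(2) G unfolding s_def by (metis Gp.simps(2) Mp_def)
  have "Cp h m lam (Suc j) = mul2 (1 + m - h j * lam, -m, 1, 0) (s ^ j * a, s ^ j * s * b, s ^ j / s * c, s ^ j * d)"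
    using C by (simp add: Am_def)
  also have "\<dots> = (s ^ Suc j * g1, s ^ Suc j * s * g2, s ^ Suc j / s * g3, s ^ Suc j * g4)"
  proof -
    have e: "g1 = (1 + m - h j * lam) / s * a - c" "g2 = (1 + m - h j * lam) / s * b - d"
      "g3 = a" "g4 = b" using g by auto
    show ?thesis unfolding e s(2)[symmetric] using s(1) by (simp add: field_simps)
  qed
  finally show ?case by (simp add: s_def)
qed

lemma tr_Cp: assumes m: "0 < m"
  shows "tr2 (Cp h m lam K) = sqrt m ^ K * tr2 (Gp h m lam K)"
proof -
  obtain a b c d where G: "Gp h m lam K = (a, b, c, d)" by (cases "Gp h m lam K") auto
  show ?thesis using Cp_Gp[OF m G] G by (simp add: algebra_simps)
qed

lemma det_Cp: "det2 (Cp h m lam j) = m ^ j"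
  by (induct j) (simp_all add: det2_mul id2_def Am_def)




lemma poly_bounded_on: assumes "compact (S::real set)" shows "\<exists>M. \<forall>x\<in>S. \<bar>poly p x\<bar> \<le> M"
proof (cases "S = {}")
  case True then show ?thesis by simp
next
  case False
  have "compact ((\<lambda>x. \<bar>poly p x\<bar>) ` S)"
    by (rule compact_continuous_image[OF _ assms]) (intro continuous_intros)
  then obtain M where "M \<in> (\<lambda>x. \<bar>poly p x\<bar>) ` S" "\<forall>t\<in>(\<lambda>x. \<bar>poly p x\<bar>) ` S. t \<le> M"
    using compact_attains_sup[of "(\<lambda>x. \<bar>poly p x\<bar>) ` S"] False by blast
  thus ?thesis by auto
qed

lemma tinv_decr: assumes "0 < u" "u < v" "v \<le> (1::real)" shows "v + 1 / v < u + 1 / u"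
proof -
  have "u + 1 / u - (v + 1 / v) = (v - u) * (1 - u * v) / (u * v)"
    using assms by (simp add: field_simps)
  moreover have "(v - u) * (1 - u * v) / (u * v) > 0"
  proof -
    have "u * v < 1 * v" using mult_strict_right_mono[of u 1 v] assms by simp
    hence "u * v < 1" using assms by linarith
    thus ?thesis using assms by (intro divide_pos_pos mult_pos_pos) auto
  qed
  ultimately show ?thesis by simp
qed

lemma key_ineq:
  fixes X Y A :: real
  assumes X: "0 < X" and Y: "0 < Y" "Y \<le> 1" and A: "0 < A" "A \<le> 1"
    and le: "X + 1 / X \<le> (Y + 1 / Y) * (A + 1 / A) / 2"
  shows "A * Y \<le> X"
proof (rule ccontr)
  assume "\<not> A * Y \<le> X"
  hence lt: "X < A * Y" by simp
  have AY1: "A * Y \<le> 1" using A Y by (metis mult_le_one less_le)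
  have "A * Y + 1 / (A * Y) < X + 1 / X" by (rule tinv_decr[OF X lt AY1])
  moreover have "(Y + 1 / Y) * (A + 1 / A) / 2 \<le> A * Y + 1 / (A * Y)"
  proof -
    have "A * Y + 1 / (A * Y) - (Y + 1 / Y) * (A + 1 / A) / 2 = (1 - A^2) * (1 - Y^2) / (2 * A * Y)"
      using A Y by (simp add: field_simps power2_eq_square)
    moreover have "(1 - A^2) * (1 - Y^2) / (2 * A * Y) \<ge> 0"
      using A Y by (intro divide_nonneg_pos mult_nonneg_nonneg) (auto simp: power_le_one)
    ultimately show ?thesis by linarith
  qed
  ultimately show False using le by simp
qed

lemma lin_growth:
  fixes x :: "nat \<Rightarrow> real"
  assumes rec: "\<And>n. x (Suc (Suc n)) = 2 * c * x (Suc n) - x n" and c: "\<bar>c\<bar> \<le> 1"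
  shows "\<bar>x n\<bar> \<le> (real n + 1) * (\<bar>x 0\<bar> + \<bar>x 1\<bar>)"
proof -
  define E where "E = (x 1)^2 - 2 * c * x 1 * x 0 + (x 0)^2"
  have cons: "(x (Suc n))^2 - 2 * c * x (Suc n) * x n + (x n)^2 = E" for n
  proof (induct n)
    case 0 then show ?case by (simp add: E_def)
  next
    case (Suc n)
    then show ?case by (simp add: rec power2_eq_square algebra_simps)
  qed
  have E0: "(x (Suc n) - c * x n)^2 \<le> E" for n
  proof -
    have "(x (Suc n) - c * x n)^2 + (1 - c^2) * (x n)^2 = E"
      using cons[of n] by (simp add: power2_eq_square algebra_simps)
    moreover have "(1 - c^2) * (x n)^2 \<ge> 0"
      using c by (intro mult_nonneg_nonneg) (auto simp: abs_square_le_1)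
    ultimately show ?thesis by linarith
  qed
  have sE: "sqrt E \<le> \<bar>x 0\<bar> + \<bar>x 1\<bar>"
  proof -
    have "E \<le> (\<bar>x 0\<bar> + \<bar>x 1\<bar>)^2"
    proof -
      have "- 2 * c * x 1 * x 0 \<le> 2 * \<bar>x 1\<bar> * \<bar>x 0\<bar>"
      proof -
        have "\<bar>c\<bar> * (\<bar>x 1\<bar> * \<bar>x 0\<bar>) \<le> \<bar>x 1\<bar> * \<bar>x 0\<bar>"
          by (rule mult_left_le_one_le) (use c in auto)
        hence "\<bar>c * x 1 * x 0\<bar> \<le> \<bar>x 1\<bar> * \<bar>x 0\<bar>"
          by (simp add: abs_mult mult.assoc)
        thus ?thesis by linarith
      qed
      thus ?thesis by (simp add: E_def power2_eq_square algebra_simps abs_mult[symmetric])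
    qed
    hence "sqrt E \<le> sqrt ((\<bar>x 0\<bar> + \<bar>x 1\<bar>)^2)" by (rule real_sqrt_le_mono)
    thus ?thesis by simp
  qed
  have step: "\<bar>x (Suc n)\<bar> \<le> \<bar>x n\<bar> + sqrt E" for n
  proof -
    have "\<bar>x (Suc n) - c * x n\<bar> \<le> sqrt E" using E0[of n] real_le_rsqrt by (metis real_sqrt_abs real_sqrt_le_mono)
    moreover have "\<bar>c * x n\<bar> \<le> \<bar>x n\<bar>" using c by (simp add: abs_mult mult_left_le_one_le)
    ultimately show ?thesis by linarith
  qed
  have "\<bar>x n\<bar> \<le> \<bar>x 0\<bar> + real n * sqrt E"
  proof (induct n)
    case 0 then show ?case by simp
  next
    case (Suc n) then show ?case using step[of n] by (simp add: algebra_simps)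
  qed
  also have "\<dots> \<le> \<bar>x 0\<bar> + real n * (\<bar>x 0\<bar> + \<bar>x 1\<bar>)"
    using sE by (simp add: mult_left_mono)
  also have "\<dots> \<le> (real n + 1) * (\<bar>x 0\<bar> + \<bar>x 1\<bar>)" by (simp add: algebra_simps)
  finally show ?thesis .
qed

locale P5 =
  fixes Lam :: "real set" and mu L :: real and K :: nat and sK :: "real poly"
    and h :: "nat \<Rightarrow> real" and m :: real
  assumes cLam: "compact Lam" and sub: "Lam \<subseteq> {mu..L}" and mu: "0 < mu" "mu < L"
    and K: "1 \<le> K" and opt: "is_optimal_link_poly K Lam sK"
    and m: "0 < m" "m < 1" and link: "\<forall>lam. link_sigma h m K lam = poly sK lam"
begin

definition "s = sqrt m"
definition "s0 = poly sK 0"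
definition "a = s0 - sqrt (s0\<^sup>2 - 1)"

lemma s_pos: "0 < s" and s_lt1: "s < 1" and ss: "s * s = m"
  using m by (auto simp: s_def)

lemma sK_pos: "0 < s ^ K" "s ^ K < 1"
  using s_pos s_lt1 K by (auto simp: power_less_one_iff)

lemma s0_eq: "s0 = (s ^ K + 1 / s ^ K) / 2"
proof -
  have "s0 = link_sigma h m K 0" using link by (simp add: s0_def)
  also have "\<dots> = tr2 (Gp h m 0 K) / 2" by (simp add: link_sigma_Gp)
  also have "\<dots> = (s ^ K + 1 / s ^ K) / 2" using Gp0_trace[OF m(1)] by (simp add: s_def)
  finally show ?thesis .
qed

lemma a_eq: "a = s ^ K"
proof -
  define x where "x = s ^ K"
  have x: "0 < x" "x < 1" using sK_pos by (auto simp: x_def)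
  have "s0\<^sup>2 - 1 = ((1 / x - x) / 2)\<^sup>2"
    using x by (simp add: s0_eq x_def[symmetric] field_simps power2_eq_square)
  moreover have "1 / x - x \<ge> 0"
  proof -
    have "1 / x > 1" using x by simp
    thus ?thesis using x by linarith
  qed
  ultimately have "sqrt (s0\<^sup>2 - 1) = (1 / x - x) / 2" by simp
  thus ?thesis by (simp add: a_def s0_eq x_def[symmetric] field_simps)
qed

lemma a_pos: "0 < a" and a_lt1: "a < 1" using sK_pos by (auto simp: a_eq)

lemma s_a: "s = a powr (1 / real K)"
proof -
  have "a powr (1 / real K) = (s powr real K) powr (1 / real K)"
    using s_pos by (simp add: a_eq powr_realpow)
  also have "\<dots> = s" using s_pos K by (simp add: powr_powr)
  finally show ?thesis by simp
qed

lemma m_eq: "m = a powr (2 / real K)"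
proof -
  have "a powr (2 / real K) = (s powr real K) powr (2 / real K)"
    using s_pos by (simp add: a_eq powr_realpow)
  also have "\<dots> = s powr 2" using s_pos K by (simp add: powr_powr)
  also have "\<dots> = m" using s_pos ss by (simp add: powr_realpow power2_eq_square)
  finally show ?thesis by simp
qed

lemma sK_bound: "\<forall>l\<in>Lam. \<bar>poly sK l\<bar> \<le> 1"
  using opt by (simp add: is_optimal_link_poly_def)

lemma opt_le: "degree q \<le> K \<Longrightarrow> \<forall>l\<in>Lam. \<bar>poly q l\<bar> \<le> 1 \<Longrightarrow> poly q 0 \<le> s0"
  using opt by (simp add: is_optimal_link_poly_def s0_def)

lemma Lam_ne: "Lam \<noteq> {}"
proof
  assume e: "Lam = {}"
  have "degree (sK + [:1:]) \<le> K"
    using opt degree_add_le[of sK K "[:1:]"] by (simp add: is_optimal_link_poly_def)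
  hence "poly (sK + [:1:]) 0 \<le> s0" using opt_le e by blast
  thus False by (simp add: s0_def)
qed

lemma sK_att: "\<exists>l\<in>Lam. \<bar>poly sK l\<bar> = 1"
proof -
  have "compact ((\<lambda>x. \<bar>poly sK x\<bar>) ` Lam)"
    by (rule compact_continuous_image[OF _ cLam]) (intro continuous_intros)
  then obtain M where M: "M \<in> (\<lambda>x. \<bar>poly sK x\<bar>) ` Lam" "\<forall>t\<in>(\<lambda>x. \<bar>poly sK x\<bar>) ` Lam. t \<le> M"
    using compact_attains_sup[of "(\<lambda>x. \<bar>poly sK x\<bar>) ` Lam"] Lam_ne by blast
  have "M \<ge> 1"
  proof (rule ccontr)
    assume "\<not> M \<ge> 1"
    hence M1: "M < 1" by simp
    define q where "q = sK + [:1 - M:]"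
    have "degree q \<le> K"
      using opt degree_add_le[of sK K "[:1 - M:]"] by (simp add: is_optimal_link_poly_def q_def)
    moreover have "\<forall>l\<in>Lam. \<bar>poly q l\<bar> \<le> 1"
    proof
      fix l assume "l \<in> Lam"
      hence "\<bar>poly sK l\<bar> \<le> M" using M(2) by auto
      thus "\<bar>poly q l\<bar> \<le> 1" using M1 by (simp add: q_def)
    qed
    ultimately have "poly q 0 \<le> s0" by (rule opt_le)
    thus False using M1 by (simp add: q_def s0_def)
  qed
  moreover have "M \<le> 1" using M(1) sK_bound by auto
  ultimately show ?thesis using M(1) by auto
qed

lemma Wv_next: "Wv h m K lam (Suc n * K) = app2 (Cp h m lam K) (Wv h m K lam (n * K))"
  using Wv_block[OF m(1), of K K h lam n] by (simp add: add.commute)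

lemma trB: "tr2 (Cp h m lam K) = 2 * a * poly sK lam"
proof -
  have "tr2 (Cp h m lam K) = s ^ K * tr2 (Gp h m lam K)" using tr_Cp[OF m(1)] by (simp add: s_def)
  also have "tr2 (Gp h m lam K) = 2 * poly sK lam" using link link_sigma_Gp[of h m K lam] by simp
  finally show ?thesis by (simp add: a_eq)
qed

lemma detB: "det2 (Cp h m lam K) = a\<^sup>2"
  using det_Cp[of h m lam K] ss by (simp add: a_eq power_mult_distrib[symmetric] power2_eq_square power_mult[symmetric] mult.commute)

lemma Wv_rec: "Wv h m K lam ((n + 2) * K) =
   (2 * a * poly sK lam * fst (Wv h m K lam ((n + 1) * K)) - a\<^sup>2 * fst (Wv h m K lam (n * K)),
    2 * a * poly sK lam * snd (Wv h m K lam ((n + 1) * K)) - a\<^sup>2 * snd (Wv h m K lam (n * K)))"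
proof -
  have "Wv h m K lam ((n + 2) * K) = app2 (Cp h m lam K) (app2 (Cp h m lam K) (Wv h m K lam (n * K)))"
    using Wv_next[of lam "Suc n"] Wv_next[of lam n] by (simp add: numeral_2_eq_2)
  also have "\<dots> = (2 * a * poly sK lam * fst (Wv h m K lam ((n + 1) * K)) - a\<^sup>2 * fst (Wv h m K lam (n * K)),
    2 * a * poly sK lam * snd (Wv h m K lam ((n + 1) * K)) - a\<^sup>2 * snd (Wv h m K lam (n * K)))"
    unfolding cayley2 trB detB using Wv_next[of lam n] by simp
  finally show ?thesis .
qed

lemma part3: "poly (res_poly h m K ((n + 2) * K)) lam =
   2 * a * poly sK lam * poly (res_poly h m K ((n + 1) * K)) lam - a\<^sup>2 * poly (res_poly h m K (n * K)) lam"
  using arg_cong[OF Wv_rec[of lam n], of fst] by (simp add: Wv_def pv_def)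

lemma sigma_star_self: "sigma_star Lam h m K \<le> 1"
  unfolding sigma_star_def using Lam_ne sK_bound link by (intro cSUP_least) auto

lemma rate_self: "rate_factor_formula Lam h m K = s"
  using sigma_star_self by (simp add: rate_factor_formula_def s_def)

lemma rate_other: assumes m': "0 < m'" "m' < 1"
  shows "s \<le> rate_factor_formula Lam h' m' K"
proof -
  obtain q where q: "degree q \<le> K" "\<forall>lam. link_sigma h' m' K lam = poly q lam"
    using link_sigma_poly by blast
  define s' where "s' = sqrt m'"
  have s': "0 < s'" "s' < 1" using m' by (auto simp: s'_def)
  define X where "X = s' ^ K"
  have X: "0 < X" "X < 1" using s' K by (auto simp: X_def power_less_one_iff)
  have q0: "poly q 0 = (X + 1 / X) / 2"
    using q(2) link_sigma_Gp[of h' m' K 0] Gp0_trace[OF m'(1), of h' K] by (simp add: X_def s'_def)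
  obtain Mb where Mb: "\<forall>l\<in>Lam. \<bar>poly q l\<bar> \<le> Mb" using poly_bounded_on[OF cLam] by blast
  define S where "S = sigma_star Lam h' m' K"
  have bdd: "bdd_above ((\<lambda>l. \<bar>link_sigma h' m' K l\<bar>) ` Lam)"
    using Mb q(2) by (auto intro!: bdd_aboveI2)
  have qS: "\<forall>l\<in>Lam. \<bar>poly q l\<bar> \<le> S"
    using cSUP_upper[OF _ bdd] q(2) by (auto simp: S_def sigma_star_def)
  have A: "0 < a" "a \<le> 1" using a_pos a_lt1 by auto
  have s0a: "s0 = (a + 1 / a) / 2" using s0_eq a_eq by simp
  show ?thesis
  proof (cases "S \<le> 1")
    case True
    have "poly q 0 \<le> s0" using opt_le[OF q(1)] qS True by force
    hence "X + 1 / X \<le> (1 + 1 / 1) * (a + 1 / a) / 2" using q0 s0a by simp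
    hence "a * 1 \<le> X" by (intro key_ineq) (use X A in auto)
    hence "s ^ K \<le> s' ^ K" by (simp add: a_eq X_def)
    moreover obtain k where "K = Suc k" using K by (cases K) auto
    ultimately have "s \<le> s'" using s' power_le_imp_le_base[of s k s'] by simp
    thus ?thesis using True by (simp add: rate_factor_formula_def S_def s'_def)
  next
    case False
    hence S1: "S > 1" by simp
    define r where "r = sqrt (S\<^sup>2 - 1)"
    have r0: "0 \<le> r" using S1 by (simp add: r_def)
    have rr: "r * r = S\<^sup>2 - 1" using S1 by (simp add: r_def)
    define Y where "Y = S - r"
    have "r < sqrt (S\<^sup>2)" unfolding r_def by (rule real_sqrt_less_mono) simp
    hence rS: "r < S" using S1 by simp
    have "S - 1 = sqrt ((S - 1)\<^sup>2)" using S1 by simp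
    also have "\<dots> \<le> r" unfolding r_def using S1
      by (intro real_sqrt_le_mono) (simp add: power2_eq_square algebra_simps)
    finally have Sr1: "S - 1 \<le> r" .
    have Y: "0 < Y" "Y \<le> 1" using rS Sr1 by (auto simp: Y_def)
    have YI: "1 / Y = S + r"
    proof -
      have "(S - r) * (S + r) = 1" using rr by (simp add: algebra_simps power2_eq_square)
      thus ?thesis using Y by (simp add: Y_def field_simps)
    qed
    have SY: "S = (Y + 1 / Y) / 2" unfolding YI by (simp add: Y_def)
    have S0: "S > 0" using S1 by simp
    have "degree (Polynomial.smult (1 / S) q) \<le> K" using q(1) by (simp add: degree_smult_le order_trans)
    moreover have "\<forall>l\<in>Lam. \<bar>poly (Polynomial.smult (1 / S) q) l\<bar> \<le> 1"
      using qS S0 by (simp add: abs_mult divide_le_eq_1)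
    ultimately have "poly (Polynomial.smult (1 / S) q) 0 \<le> s0" by (rule opt_le)
    hence "poly q 0 \<le> S * s0" using S0 by (simp add: field_simps)
    hence "2 * poly q 0 \<le> 2 * (S * s0)" by simp
    moreover have "X + 1 / X = 2 * poly q 0" by (simp add: q0)
    moreover have "2 * (S * s0) = (Y + 1 / Y) * (a + 1 / a) / 2" by (simp add: SY s0a)
    ultimately have "X + 1 / X \<le> (Y + 1 / Y) * (a + 1 / a) / 2" by simp
    hence aY: "a * Y \<le> X" by (intro key_ineq) (use X A Y in auto)
    have "a \<le> X * (S + r)" using aY Y by (simp add: YI[symmetric] field_simps)
    hence "a powr (1 / real K) \<le> (X * (S + r)) powr (1 / real K)"
      using A by (intro powr_mono2) auto
    also have "\<dots> = X powr (1 / real K) * (S + r) powr (1 / real K)"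
      using X S0 r0 by (simp add: powr_mult)
    also have "X powr (1 / real K) = s'"
    proof -
      have "X powr (1 / real K) = (s' powr real K) powr (1 / real K)"
        using s' by (simp add: X_def powr_realpow)
      also have "\<dots> = s'" using s' K by (simp add: powr_powr)
      finally show ?thesis .
    qed
    finally have "s \<le> s' * (S + r) powr (1 / real K)" using s_a by simp
    thus ?thesis using False by (simp add: rate_factor_formula_def S_def[symmetric] s'_def r_def Let_def)
  qed
qed


end




lemma vnorm_pos: assumes "v \<in> carrier_vec d" "v \<noteq> 0\<^sub>v d" shows "0 < vnorm v"
proof -
  have "v \<bullet> v \<noteq> 0" using sp_self_eq0[OF assms(1)] assms(2) by blast
  hence "v \<bullet> v > 0" using sp_self_ge0[of v] by linarith
  thus ?thesis by (simp add: vnorm_def)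
qed

lemma wr_elem_bound:
  assumes B: "\<forall>l\<in>Lam. \<bar>poly (res_poly h m K t) l\<bar> \<le> B" and B0: "0 \<le> B"
    and x: "x \<in> {vnorm (hb_iter h m K H xs x0 t - xs) / vnorm (x0 - xs) | d H xs x0.
            H \<in> carrier_mat d d \<and> transpose_mat H = H \<and>
            (\<forall>l. eigenvalue H l \<longrightarrow> l \<in> Lam) \<and>
            xs \<in> carrier_vec d \<and> x0 \<in> carrier_vec d \<and> x0 \<noteq> xs}"
  shows "x \<le> B"
proof -
  obtain d H xs x0 where x: "x = vnorm (hb_iter h m K H xs x0 t - xs) / vnorm (x0 - xs)"
    and H: "H \<in> carrier_mat d d" "transpose_mat H = H" "\<forall>l. eigenvalue H l \<longrightarrow> l \<in> Lam"
    and v: "xs \<in> carrier_vec d" "x0 \<in> carrier_vec d" "x0 \<noteq> xs"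
    using x by blast
  have ne: "x0 - xs \<noteq> 0\<^sub>v d"
  proof
    assume "x0 - xs = 0\<^sub>v d"
    hence z: "(x0 - xs) $ i = 0" if "i < d" for i using that by simp
    have "x0 = xs"
    proof (rule eq_vecI)
      fix i assume "i < dim_vec xs"
      hence "i < d" using v by simp
      thus "x0 $ i = xs $ i" using z[of i] v by simp
    qed (use v in simp)
    with v show False by simp
  qed
  have pos: "0 < vnorm (x0 - xs)" using vnorm_pos[OF _ ne] v by simp
  have "vnorm (hb_iter h m K H xs x0 t - xs) \<le> B * vnorm (x0 - xs)"
    by (rule rate_bound[OF H v(1,2) B B0])
  thus ?thesis using pos by (simp add: x pos_divide_le_eq)
qed

lemma wr_elem_1:
  assumes l: "l \<in> Lam"
  shows "\<bar>poly (res_poly h m K t) l\<bar> \<in> {vnorm (hb_iter h m K H xs x0 t - xs) / vnorm (x0 - xs) | d H xs x0.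
            H \<in> carrier_mat d d \<and> transpose_mat H = H \<and>
            (\<forall>l. eigenvalue H l \<longrightarrow> l \<in> Lam) \<and>
            xs \<in> carrier_vec d \<and> x0 \<in> carrier_vec d \<and> x0 \<noteq> xs}"
proof -
  define H1 :: "real mat" where "H1 = mat 1 1 (\<lambda>_. l)"
  define xs :: "real vec" where "xs = 0\<^sub>v 1"
  define x0 :: "real vec" where "x0 = vec 1 (\<lambda>_. 1)"
  have H1: "H1 \<in> carrier_mat 1 1" by (simp add: H1_def)
  have sy: "transpose_mat H1 = H1" by (intro eq_matI) (auto simp: H1_def)
  interpret symH 1 H1 using H1 sy by unfold_locales
  have ev: "\<forall>l'. eigenvalue H1 l' \<longrightarrow> l' \<in> Lam"
  proof (intro allI impI)
    fix l' assume "eigenvalue H1 l'"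
    then obtain v where v: "v \<in> carrier_vec 1" "v \<noteq> 0\<^sub>v 1" "H1 *\<^sub>v v = l' \<cdot>\<^sub>v v"
      unfolding eigenvalue_def eigenvector_def by (auto simp: H1_def)
    have v0: "v $ 0 \<noteq> 0"
    proof
      assume "v $ 0 = 0"
      hence "v = 0\<^sub>v 1" using v(1) by (intro eq_vecI) auto
      with v(2) show False by simp
    qed
    have "(H1 *\<^sub>v v) $ 0 = l * v $ 0"
      using v(1) by (simp add: H1_def scalar_prod_def row_def)
    moreover have "(l' \<cdot>\<^sub>v v) $ 0 = l' * v $ 0" using v(1) by simp
    ultimately have "l * v $ 0 = l' * v $ 0" using v(3) by metis
    hence "l' = l" using v0 by auto
    thus "l' \<in> Lam" using l by simp
  qed
  have xs: "xs \<in> carrier_vec 1" and x0: "x0 \<in> carrier_vec 1" by (auto simp: xs_def x0_def)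
  have ne: "x0 \<noteq> xs"
  proof
    assume "x0 = xs" hence "x0 $ 0 = xs $ 0" by simp
    thus False by (simp add: x0_def xs_def)
  qed
  define e where "e = x0 - xs"
  have e: "e \<in> carrier_vec 1" using x0 xs by (simp add: e_def)
  have He: "H1 *\<^sub>v e = l \<cdot>\<^sub>v e"
    using e by (intro eq_vecI) (auto simp: H1_def scalar_prod_def row_def)
  have g: "goodl [(l, e)]" unfolding goodl_def using e He by simp
  have vs: "x0 - xs = vsum 1 [(l, e)]" using e by (simp add: e_def)
  have rep: "hb_iter h m K H1 xs x0 t - xs = lsum (\<lambda>l. poly (res_poly h m K t) l) [(l, e)]"
    by (rule hb_rep[OF g xs x0 vs])
  have ee: "e \<bullet> e = 1" by (simp add: e_def x0_def xs_def scalar_prod_def)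
  have "vnorm (hb_iter h m K H1 xs x0 t - xs) = \<bar>poly (res_poly h m K t) l\<bar>"
    unfolding rep using lsum_norm2[OF g, of "\<lambda>l. poly (res_poly h m K t) l"] ee
    by (simp add: vnorm_def)
  moreover have "vnorm (x0 - xs) = 1" using ee by (simp add: vnorm_def e_def)
  ultimately have "\<bar>poly (res_poly h m K t) l\<bar> = vnorm (hb_iter h m K H1 xs x0 t - xs) / vnorm (x0 - xs)"
    by simp
  thus ?thesis using H1 sy ev xs x0 ne by blast
qed

lemma wr_props:
  assumes Bb: "\<forall>l\<in>Lam. \<bar>poly (res_poly h m K t) l\<bar> \<le> B" and B0: "0 \<le> B" and l0: "l0 \<in> Lam"
  shows "worst_rate Lam h m K t \<le> B \<and> (\<forall>l\<in>Lam. \<bar>poly (res_poly h m K t) l\<bar> \<le> worst_rate Lam h m K t)"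
proof -
  define S where "S = {vnorm (hb_iter h m K H xs x0 t - xs) / vnorm (x0 - xs) | d H xs x0.
            H \<in> carrier_mat d d \<and> transpose_mat H = H \<and>
            (\<forall>l. eigenvalue H l \<longrightarrow> l \<in> Lam) \<and>
            xs \<in> carrier_vec d \<and> x0 \<in> carrier_vec d \<and> x0 \<noteq> xs}"
  have W: "worst_rate Lam h m K t = Sup S" by (simp add: worst_rate_def S_def)
  have mem: "\<bar>poly (res_poly h m K t) l\<bar> \<in> S" if "l \<in> Lam" for l
    unfolding S_def by (rule wr_elem_1[OF that])
  have ub: "x \<le> B" if "x \<in> S" for x
    using wr_elem_bound[OF Bb B0] that unfolding S_def by blast
  have ne: "S \<noteq> {}" using mem[OF l0] by blast
  have bdd: "bdd_above S" by (rule bdd_aboveI[of S B]) (rule ub)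
  have "Sup S \<le> B" by (rule cSup_least[OF ne]) (rule ub)
  moreover have "\<bar>poly (res_poly h m K t) l\<bar> \<le> Sup S" if "l \<in> Lam" for l
    by (rule cSup_upper[OF mem[OF that] bdd])
  ultimately show ?thesis unfolding W by blast
qed

context P5 begin

definition "Hs = (\<Sum>i<K. \<bar>h i\<bar>)"
definition "R = 1 + 2 * m + Hs * L"

fun nm :: "real \<times> real \<Rightarrow> real" where "nm (u, v) = max \<bar>u\<bar> \<bar>v\<bar>"

lemma nm_nonneg: "0 \<le> nm w" by (cases w) auto

lemma Hs_ge: "i < K \<Longrightarrow> \<bar>h i\<bar> \<le> Hs"
  unfolding Hs_def by (rule member_le_sum) auto

lemma Hs0: "0 \<le> Hs" unfolding Hs_def by (simp add: sum_nonneg)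

lemma L0: "0 < L" using mu by simp

lemma R1: "1 \<le> R" using m Hs0 L0 by (simp add: R_def)

lemma lam_abs: "lam \<in> Lam \<Longrightarrow> \<bar>lam\<bar> \<le> L" using sub mu by auto

lemma step_bound: assumes l: "lam \<in> Lam"
  shows "nm (Wv h m K lam (Suc t)) \<le> R * nm (Wv h m K lam t)"
proof -
  obtain u v where W: "Wv h m K lam t = (u, v)" by (cases "Wv h m K lam t") auto
  define i where "i = t mod K"
  have i: "i < K" using K by (simp add: i_def)
  have hi: "\<bar>h i * lam\<bar> \<le> Hs * L"
    using Hs_ge[OF i] lam_abs[OF l] by (simp add: abs_mult mult_mono Hs0)
  have "\<bar>(1 + m - h i * lam) * u - m * v\<bar> \<le> \<bar>(1 + m - h i * lam) * u\<bar> + \<bar>m * v\<bar>"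
    by (rule abs_triangle_ineq4)
  hence "\<bar>(1 + m - h i * lam) * u + - m * v\<bar> \<le> \<bar>1 + m - h i * lam\<bar> * \<bar>u\<bar> + m * \<bar>v\<bar>"
    using m by (simp add: abs_mult)
  also have "\<dots> \<le> (1 + m + Hs * L) * max \<bar>u\<bar> \<bar>v\<bar> + m * max \<bar>u\<bar> \<bar>v\<bar>"
  proof (intro add_mono mult_mono)
    show "\<bar>1 + m - h i * lam\<bar> \<le> 1 + m + Hs * L" using hi m by linarith
  qed (use m Hs0 L0 in auto)
  also have "\<dots> = R * max \<bar>u\<bar> \<bar>v\<bar>" by (simp add: R_def algebra_simps)
  finally have 1: "\<bar>(1 + m - h i * lam) * u + - m * v\<bar> \<le> R * max \<bar>u\<bar> \<bar>v\<bar>" .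
  have 2: "\<bar>u\<bar> \<le> R * max \<bar>u\<bar> \<bar>v\<bar>"
    using R1 by (metis max.cobounded1 abs_ge_zero max.coboundedI1 mult_le_cancel_right1 mult_right_mono order_trans mult_1)
  show ?thesis using Wv_step[OF m(1), of h K lam t] W 1 2 by (simp add: Am_def i_def)
qed

lemma block_bound: "lam \<in> Lam \<Longrightarrow> nm (Wv h m K lam (t + j)) \<le> R ^ j * nm (Wv h m K lam t)"
proof (induct j)
  case 0 then show ?case by simp
next
  case (Suc j)
  have "nm (Wv h m K lam (t + Suc j)) \<le> R * nm (Wv h m K lam (t + j))"
    using step_bound[OF Suc(2), of "t + j"] by simp
  also have "\<dots> \<le> R * (R ^ j * nm (Wv h m K lam t))"
    using Suc R1 by (intro mult_left_mono) auto
  finally show ?case by simp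
qed

lemma scaled_rec:
  fixes F :: "nat \<Rightarrow> real"
  assumes rec: "\<And>n. F (n + 2) = 2 * a * c * F (n + 1) - a\<^sup>2 * F n"
  shows "F (n + 2) / a ^ (n + 2) = 2 * c * (F (n + 1) / a ^ (n + 1)) - F n / a ^ n"
  using rec[of n] a_pos by (simp add: field_simps power2_eq_square)

lemma seq_bound:
  fixes F :: "nat \<Rightarrow> real"
  assumes rec: "\<And>n. F (n + 2) = 2 * a * c * F (n + 1) - a\<^sup>2 * F n" and c: "\<bar>c\<bar> \<le> 1"
  shows "\<bar>F n\<bar> \<le> (real n + 1) * (\<bar>F 0\<bar> + \<bar>F 1\<bar> / a) * a ^ n"
proof -
  define x where "x n = F n / a ^ n" for n
  have "\<bar>x n\<bar> \<le> (real n + 1) * (\<bar>x 0\<bar> + \<bar>x 1\<bar>)"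
  proof (rule lin_growth[OF _ c])
    fix n show "x (Suc (Suc n)) = 2 * c * x (Suc n) - x n"
      using scaled_rec[OF rec, of n] by (simp add: x_def)
  qed
  hence "\<bar>F n\<bar> / a ^ n \<le> (real n + 1) * (\<bar>F 0\<bar> + \<bar>F 1\<bar> / a)"
    using a_pos by (simp add: x_def abs_divide)
  thus ?thesis using a_pos by (simp add: field_simps)
qed

lemma uniform_bound: "\<exists>Cb>0. \<forall>t. \<forall>l\<in>Lam. \<bar>poly (res_poly h m K t) l\<bar> \<le> Cb * (real t + 1) * a powr (real t / real K)"
proof -
  obtain M1 where M1: "\<forall>l\<in>Lam. \<bar>poly (res_poly h m K K) l\<bar> \<le> M1" using poly_bounded_on[OF cLam] by blast
  obtain M2 where M2: "\<forall>l\<in>Lam. \<bar>poly (res_poly h m K 1) l\<bar> \<le> M2" using poly_bounded_on[OF cLam] by blast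
  obtain M3 where M3: "\<forall>l\<in>Lam. \<bar>poly (res_poly h m K (K - 1)) l\<bar> \<le> M3" using poly_bounded_on[OF cLam] by blast
  define C0 where "C0 = 1 + \<bar>M1\<bar> / a + \<bar>M2\<bar> + \<bar>M3\<bar> / a"
  have C0: "C0 \<ge> 1" using a_pos by (simp add: C0_def)
  have Wn: "nm (Wv h m K l (n * K)) \<le> (real n + 1) * C0 * a ^ n" if l: "l \<in> Lam" for l n
  proof -
    have sl: "\<bar>poly sK l\<bar> \<le> 1" using sK_bound l by blast
    have r1: "\<bar>fst (Wv h m K l (n * K))\<bar> \<le> (real n + 1) * (\<bar>fst (Wv h m K l (0 * K))\<bar> + \<bar>fst (Wv h m K l (1 * K))\<bar> / a) * a ^ n"
      by (rule seq_bound[OF _ sl, of "\<lambda>n. fst (Wv h m K l (n * K))"]) (use Wv_rec[of l] in simp)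
    have r2: "\<bar>snd (Wv h m K l (n * K))\<bar> \<le> (real n + 1) * (\<bar>snd (Wv h m K l (0 * K))\<bar> + \<bar>snd (Wv h m K l (1 * K))\<bar> / a) * a ^ n"
      by (rule seq_bound[OF _ sl, of "\<lambda>n. snd (Wv h m K l (n * K))"]) (use Wv_rec[of l] in simp)
    have e1: "\<bar>fst (Wv h m K l (0 * K))\<bar> + \<bar>fst (Wv h m K l (1 * K))\<bar> / a \<le> C0"
    proof -
      have "\<bar>fst (Wv h m K l (1 * K))\<bar> / a \<le> \<bar>M1\<bar> / a"
        using M1 l a_pos by (intro divide_right_mono) (auto simp: Wv_def pv_def abs_le_iff)
      moreover have "\<bar>fst (Wv h m K l (0 * K))\<bar> = 1" by (simp add: Wv_def pv_def)
      moreover have "0 \<le> \<bar>M3\<bar> / a" using a_pos by simp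
      ultimately show ?thesis unfolding C0_def by linarith
    qed
    have e2: "\<bar>snd (Wv h m K l (0 * K))\<bar> + \<bar>snd (Wv h m K l (1 * K))\<bar> / a \<le> C0"
    proof -
      have "snd (Wv h m K l (0 * K)) = poly (res_poly h m K 1) l"
        by (simp add: Wv_def pv_def del: res_poly.simps)
      moreover have "\<bar>poly (res_poly h m K 1) l\<bar> \<le> M2" using M2 l by blast
      ultimately have "\<bar>snd (Wv h m K l (0 * K))\<bar> \<le> \<bar>M2\<bar>" by simp
      moreover have "\<bar>snd (Wv h m K l (1 * K))\<bar> / a \<le> \<bar>M3\<bar> / a"
        using M3 l K a_pos by (intro divide_right_mono) (auto simp: Wv_def pv_def abs_le_iff)
      moreover have "0 \<le> \<bar>M1\<bar> / a" using a_pos by simp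
      ultimately show ?thesis unfolding C0_def by simp
    qed
    have f1: "\<bar>fst (Wv h m K l (n * K))\<bar> \<le> (real n + 1) * C0 * a ^ n"
      by (rule order_trans[OF r1]) (use e1 a_pos in \<open>intro mult_right_mono mult_left_mono, auto\<close>)
    have f2: "\<bar>snd (Wv h m K l (n * K))\<bar> \<le> (real n + 1) * C0 * a ^ n"
      by (rule order_trans[OF r2]) (use e2 a_pos in \<open>intro mult_right_mono mult_left_mono, auto\<close>)
    show ?thesis using f1 f2 by (cases "Wv h m K l (n * K)") auto
  qed
  define Cb where "Cb = R ^ K * C0 / a"
  have Cb: "Cb > 0" using R1 C0 a_pos by (simp add: Cb_def)
  have "\<bar>poly (res_poly h m K t) l\<bar> \<le> Cb * (real t + 1) * a powr (real t / real K)" if l: "l \<in> Lam" for t l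
  proof -
    define n where "n = t div K"
    define j where "j = t mod K"
    have t: "t = n * K + j" by (simp add: n_def j_def)
    have jK: "j < K" using K by (simp add: j_def)
    have "\<bar>poly (res_poly h m K t) l\<bar> \<le> nm (Wv h m K l t)"
      by (cases "Wv h m K l t") (auto simp: Wv_def pv_def)
    also have "\<dots> \<le> R ^ j * nm (Wv h m K l (n * K))" unfolding t by (rule block_bound[OF l])
    also have "\<dots> \<le> R ^ K * ((real n + 1) * C0 * a ^ n)"
    proof (rule mult_mono)
      show "R ^ j \<le> R ^ K" using R1 jK by (intro power_increasing) auto
      show "nm (Wv h m K l (n * K)) \<le> (real n + 1) * C0 * a ^ n" by (rule Wn[OF l])
    qed (use R1 nm_nonneg in \<open>auto\<close>)
    also have "\<dots> \<le> R ^ K * ((real t + 1) * C0 * (a powr (real t / real K) / a))"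
    proof (intro mult_left_mono mult_mono)
      show "real n + 1 \<le> real t + 1" using div_le_dividend[of t K] by (simp add: n_def)
      have "a powr (real t / real K) = a powr (real n + real j / real K)"
        using K by (simp add: t field_simps)
      also have "\<dots> = a ^ n * a powr (real j / real K)"
        using a_pos by (simp add: powr_add powr_realpow)
      also have "\<dots> \<ge> a ^ n * a"
      proof (rule mult_left_mono)
        have "a powr 1 \<le> a powr (real j / real K)"
          using a_pos a_lt1 jK by (intro powr_mono') auto
        thus "a \<le> a powr (real j / real K)" using a_pos by simp
      qed (use a_pos in simp)
      finally show "a ^ n \<le> a powr (real t / real K) / a" using a_pos by (simp add: field_simps)
    qed (use R1 C0 a_pos in auto)
    also have "\<dots> = Cb * (real t + 1) * a powr (real t / real K)" by (simp add: Cb_def)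
    finally show ?thesis .
  qed
  with Cb show ?thesis by blast
qed


lemma lower_seq: assumes l: "l \<in> Lam" "\<bar>poly sK l\<bar> = 1"
  shows "\<exists>N. \<forall>n\<ge>N. a ^ n \<le> \<bar>poly (res_poly h m K (n * K)) l\<bar>"
proof -
  define c where "c = poly sK l"
  define F where "F n = fst (Wv h m K l (n * K))" for n
  define z where "z n = c ^ n * (F n / a ^ n)" for n
  have ca: "\<bar>c\<bar> = 1" using l(2) by (simp add: c_def)
  have cc: "c * c = 1" using abs_mult_self_eq[of c] ca by simp
  have rec: "F (n + 2) = 2 * a * c * F (n + 1) - a\<^sup>2 * F n" for n
    using Wv_rec[of l n] by (simp add: F_def c_def)
  define u where "u k = F k / a ^ k" for k
  have urec: "u (Suc (Suc n)) = 2 * c * u (Suc n) - u n" for n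
    using scaled_rec[OF rec, of n] by (simp add: u_def)
  have c2: "c ^ (k + 2) = c ^ k" for k
    using cc by (simp add: power_add power2_eq_square)
  have zrec: "z (Suc (Suc n)) = 2 * z (Suc n) - z n" for n
  proof -
    have "z (Suc (Suc n)) = c ^ (n + 2) * u (Suc (Suc n))" by (simp add: z_def u_def)
    also have "\<dots> = 2 * (c ^ (n + 2) * c) * u (Suc n) - c ^ (n + 2) * u n"
      by (simp only: urec) (simp add: algebra_simps)
    also have "c ^ (n + 2) * c = c ^ Suc n" using c2[of n] by simp
    also have "c ^ (n + 2) = c ^ n" by (rule c2)
    finally show ?thesis by (simp add: z_def u_def)
  qed
  define \<beta> where "\<beta> = z 1 - z 0"
  have z0: "z 0 = 1" by (simp add: z_def F_def Wv_def pv_def)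
  have zlin: "z n = 1 + real n * \<beta>" for n
  proof -
    have "z n = z 0 + real n * \<beta> \<and> z (Suc n) = z 0 + real (Suc n) * \<beta>"
    proof (induct n)
      case 0 then show ?case by (simp add: \<beta>_def)
    next
      case (Suc n) then show ?case by (simp add: zrec algebra_simps)
    qed
    thus ?thesis using z0 by simp
  qed
  have absz: "\<bar>F n\<bar> = a ^ n * \<bar>z n\<bar>" for n
  proof -
    have "\<bar>c ^ n\<bar> = 1" using ca by (simp add: power_abs)
    thus ?thesis using a_pos by (simp add: z_def abs_mult abs_divide)
  qed
  obtain N where N: "\<forall>n\<ge>N. 1 \<le> \<bar>1 + real n * \<beta>\<bar>"
  proof (cases "\<beta> = 0")
    case True then show ?thesis using that[of 0] by simp
  next
    case False
    define N where "N = nat \<lceil>2 / \<bar>\<beta>\<bar>\<rceil>"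
    have "1 \<le> \<bar>1 + real n * \<beta>\<bar>" if n: "n \<ge> N" for n
    proof -
      have "2 / \<bar>\<beta>\<bar> \<le> real n" using n by (simp add: N_def)
      hence "2 \<le> real n * \<bar>\<beta>\<bar>" using False by (simp add: field_simps)
      hence "2 \<le> \<bar>real n * \<beta>\<bar>" by (simp add: abs_mult)
      thus ?thesis by linarith
    qed
    thus ?thesis using that by blast
  qed
  show ?thesis
  proof (intro exI allI impI)
    fix n assume "n \<ge> N"
    hence "1 \<le> \<bar>z n\<bar>" using N zlin by simp
    hence "a ^ n * 1 \<le> a ^ n * \<bar>z n\<bar>" using a_pos by (intro mult_left_mono) auto
    thus "a ^ n \<le> \<bar>poly (res_poly h m K (n * K)) l\<bar>" using absz[of n] by (simp add: F_def Wv_def pv_def)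
  qed
qed



lemma wr_bounds: "\<exists>Cb>0. (\<forall>t. worst_rate Lam h m K t \<le> Cb * (real t + 1) * a powr (real t / real K))
   \<and> (\<forall>t. \<forall>l\<in>Lam. \<bar>poly (res_poly h m K t) l\<bar> \<le> worst_rate Lam h m K t)"
proof -
  obtain Cb where Cb: "Cb > 0" "\<forall>t. \<forall>l\<in>Lam. \<bar>poly (res_poly h m K t) l\<bar> \<le> Cb * (real t + 1) * a powr (real t / real K)"
    using uniform_bound by blast
  obtain l0 where l0: "l0 \<in> Lam" using Lam_ne by blast
  have "worst_rate Lam h m K t \<le> Cb * (real t + 1) * a powr (real t / real K) \<and>
        (\<forall>l\<in>Lam. \<bar>poly (res_poly h m K t) l\<bar> \<le> worst_rate Lam h m K t)" for t
    by (rule wr_props[OF _ _ l0]) (use Cb a_pos in auto)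
  with Cb show ?thesis by blast
qed

lemma wr_nonneg: "0 \<le> worst_rate Lam h m K t"
proof -
  obtain l0 where l0: "l0 \<in> Lam" using Lam_ne by blast
  from wr_bounds obtain Cb where "\<forall>t. \<forall>l\<in>Lam. \<bar>poly (res_poly h m K t) l\<bar> \<le> worst_rate Lam h m K t" by blast
  thus ?thesis using l0 by (meson abs_ge_zero order_trans)
qed

lemma part4a: "(\<lambda>t. worst_rate Lam h m K t) \<in> O(\<lambda>t. real t * a powr (real t / real K))"
proof -
  obtain Cb where Cb: "Cb > 0" "\<forall>t. worst_rate Lam h m K t \<le> Cb * (real t + 1) * a powr (real t / real K)"
    using wr_bounds by blast
  show ?thesis
  proof (rule bigoI)
    show "\<forall>\<^sub>F t in at_top. norm (worst_rate Lam h m K t) \<le> (2 * Cb) * norm (real t * a powr (real t / real K))"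
      unfolding eventually_sequentially
    proof (intro exI allI impI)
      fix t :: nat assume t: "t \<ge> 1"
      have "norm (worst_rate Lam h m K t) = worst_rate Lam h m K t" using wr_nonneg by simp
      also have "\<dots> \<le> Cb * (real t + 1) * a powr (real t / real K)" using Cb by blast
      also have "\<dots> \<le> Cb * (2 * real t) * a powr (real t / real K)"
        using t Cb a_pos by (intro mult_right_mono mult_left_mono) auto
      also have "\<dots> = (2 * Cb) * norm (real t * a powr (real t / real K))" using a_pos by simp
      finally show "norm (worst_rate Lam h m K t) \<le> (2 * Cb) * norm (real t * a powr (real t / real K))" .
    qed
  qed
qed

lemma part4b: "asymp_rate Lam h m K = ereal (a powr (1 / real K))"
proof (rule antisym)
  obtain Cb where Cb: "Cb > 0" "\<forall>t. worst_rate Lam h m K t \<le> Cb * (real t + 1) * a powr (real t / real K)"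
    and low: "\<forall>t. \<forall>l\<in>Lam. \<bar>poly (res_poly h m K t) l\<bar> \<le> worst_rate Lam h m K t"
    using wr_bounds by blast
  define g where "g t = (Cb * (real t + 1)) powr (1 / real t) * a powr (1 / real K)" for t :: nat
  have glim: "g \<longlonglongrightarrow> 1 * a powr (1 / real K)"
  proof -
    have "(\<lambda>t::nat. (Cb * (real t + 1)) powr (1 / real t)) \<longlonglongrightarrow> 1" using Cb(1) by real_asymp
    thus ?thesis unfolding g_def by (intro tendsto_mult tendsto_const)
  qed
  have ev: "\<forall>\<^sub>F t in sequentially. ereal (worst_rate Lam h m K t powr (1 / real t)) \<le> ereal (g t)"
    unfolding eventually_sequentially
  proof (intro exI allI impI)
    fix t :: nat assume t: "t \<ge> 1"
    have "worst_rate Lam h m K t powr (1 / real t) \<le> (Cb * (real t + 1) * a powr (real t / real K)) powr (1 / real t)"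
      using Cb wr_nonneg by (intro powr_mono2) auto
    also have "\<dots> = (Cb * (real t + 1)) powr (1 / real t) * (a powr (real t / real K)) powr (1 / real t)"
      using Cb a_pos by (simp add: powr_mult)
    also have "(a powr (real t / real K)) powr (1 / real t) = a powr (1 / real K)"
      using t by (simp add: powr_powr)
    finally show "ereal (worst_rate Lam h m K t powr (1 / real t)) \<le> ereal (g t)" by (simp add: g_def)
  qed
  have "asymp_rate Lam h m K \<le> limsup (\<lambda>t. ereal (g t))"
    unfolding asymp_rate_def by (rule Limsup_mono[OF ev])
  also have "limsup (\<lambda>t. ereal (g t)) = ereal (a powr (1 / real K))"
    using glim by (intro lim_imp_Limsup) (auto intro: tendsto_ereal)
  finally show "asymp_rate Lam h m K \<le> ereal (a powr (1 / real K))" .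
next
  obtain Cb where low: "\<forall>t. \<forall>l\<in>Lam. \<bar>poly (res_poly h m K t) l\<bar> \<le> worst_rate Lam h m K t"
    using wr_bounds by blast
  obtain ls where ls: "ls \<in> Lam" "\<bar>poly sK ls\<bar> = 1" using sK_att by blast
  obtain N where N: "\<forall>n\<ge>N. a ^ n \<le> \<bar>poly (res_poly h m K (n * K)) ls\<bar>" using lower_seq[OF ls] by blast
  define f where "f = (\<lambda>t. ereal (worst_rate Lam h m K t powr (1 / real t)))"
  define r where "r n = (n + N + 1) * K" for n
  have smr: "strict_mono r" unfolding r_def using K by (intro strict_monoI) simp
  have "ereal (a powr (1 / real K)) \<le> limsup (f \<circ> r)"
  proof (rule le_Limsup)
    show "\<forall>\<^sub>F n in sequentially. ereal (a powr (1 / real K)) \<le> (f \<circ> r) n"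
    proof (rule always_eventually, rule allI)
      fix n
      define n' where "n' = n + N + 1"
      have n'N: "n' \<ge> N" by (simp add: n'_def)
      have rn: "r n = n' * K" by (simp add: r_def n'_def)
      have pos: "0 < real n' * real K" using K by (simp add: n'_def)
      have "a ^ n' \<le> \<bar>poly (res_poly h m K (n' * K)) ls\<bar>" using N n'N by blast
      also have "\<dots> \<le> worst_rate Lam h m K (n' * K)" using low ls(1) by blast
      finally have "a ^ n' \<le> worst_rate Lam h m K (r n)" by (simp add: rn)
      hence "(a ^ n') powr (1 / real (r n)) \<le> worst_rate Lam h m K (r n) powr (1 / real (r n))"
        using a_pos by (intro powr_mono2) auto
      moreover have "(a ^ n') powr (1 / real (r n)) = a powr (1 / real K)"
      proof -
        have "(a ^ n') powr (1 / real (r n)) = (a powr real n') powr (1 / (real n' * real K))"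
          using a_pos by (simp add: rn powr_realpow)
        also have "\<dots> = a powr (real n' * (1 / (real n' * real K)))" by (rule powr_powr)
        also have "real n' * (1 / (real n' * real K)) = 1 / real K" using pos by (auto simp: field_simps)
        finally show ?thesis .
      qed
      ultimately show "ereal (a powr (1 / real K)) \<le> (f \<circ> r) n" by (simp add: f_def)
    qed
  qed simp
  also have "\<dots> \<le> limsup f" by (rule limsup_subseq_mono[OF smr])
  finally show "ereal (a powr (1 / real K)) \<le> asymp_rate Lam h m K"
    by (simp add: asymp_rate_def f_def)
qed

end


theorem proposition5:
  fixes Lam :: "real set" and mu L :: real and K :: nat
    and sK :: "real poly" and h :: "nat \<Rightarrow> real" and m :: real
  assumes "compact Lam" and "Lam \<subseteq> {mu..L}" and "0 < mu" and "mu < L"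
    and "1 \<le> K"
    and "is_optimal_link_poly K Lam sK"
    and "0 < m" and "m < 1"
    and "\<forall>lam. link_sigma h m K lam = poly sK lam"
  defines "s0 \<equiv> poly sK 0"
  defines "a \<equiv> s0 - sqrt (s0\<^sup>2 - 1)"
  shows
    "(\<forall>m' h'. 0 < m' \<longrightarrow> m' < 1 \<longrightarrow>
        rate_factor_formula Lam h m K \<le> rate_factor_formula Lam h' m' K)
     \<and> m = a powr (2 / real K)
     \<and> (\<forall>n lam. poly (res_poly h m K ((n + 2) * K)) lam =
          2 * a * poly sK lam * poly (res_poly h m K ((n + 1) * K)) lam
          - a\<^sup>2 * poly (res_poly h m K (n * K)) lam)
     \<and> (\<lambda>t. worst_rate Lam h m K t) \<in> O(\<lambda>t. real t * a powr (real t / real K))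
     \<and> asymp_rate Lam h m K = ereal (a powr (1 / real K))"
proof -
  have inst: "P5 Lam mu L K sK h m" unfolding P5_def using assms(1-9) by blast
  have aeq: "P5.a sK = a" using P5.a_def[OF inst] P5.s0_def[OF inst] assms(10,11) by simp
  show ?thesis
    using P5.rate_self[OF inst] P5.rate_other[OF inst] P5.m_eq[OF inst] P5.part3[OF inst]
      P5.part4a[OF inst] P5.part4b[OF inst] aeq by auto
qed

end
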